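(* For any graph $G=G_1\sqcup G_2$ with no edges connecting $G_1$ to $G_2$, we have $\lfloor \mathrm{sp}\rfloor(G)=\lfloor \mathrm{sp}\rfloor(G_1)+\lfloor \mathrm{sp}\rfloor(G_2)$.
   Context: All graphs are finite, have at least one vertex, have no loops, and may have multiple (parallel) edges. A unique shortest path is a shortest $u$–$v$ path $P$ such that every $u$–$v$ path with the same number of vertices is identical to $P$, where two paths with different edge sequences are different even if their vertex sequences agree; a single vertex is a unique shortest path. The parade number $\mathrm{usp}(G)$ is the largest number of vertices of a unique shortest path in $G$. The spectator number is $\mathrm{sp}(G)=|V(G)|-\mathrm{usp}(G)$. A minor of $H$ is any graph obtained from $H$ by a sequence of: deleting an isolated vertex, deleting an edge, contracting an edge that has no edge parallel to it. The spectator floor $\lfloor \mathrm{sp}\rfloor(G)$ is the minimum of $\mathrm{sp}(H)$ over all graphs $H$ of which $G$ is a minor. *)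

theory Defs
  imports Main
begin

record ('v, 'e) mgraph =
  verts :: "'v set"
  edges :: "'e set"
  ends  :: "'e \<Rightarrow> 'v set"

definition wf_graph :: "('v, 'e) mgraph \<Rightarrow> bool" where
  "wf_graph G \<longleftrightarrow> finite (verts G) \<and> finite (edges G) \<and> verts G \<noteq> {} \<and>
     (\<forall>e\<in>edges G. ends G e \<subseteq> verts G \<and> card (ends G e) = 2)"

definition is_path :: "('v, 'e) mgraph \<Rightarrow> 'v list \<Rightarrow> 'e list \<Rightarrow> bool" where
  "is_path G vs es \<longleftrightarrow> vs \<noteq> [] \<and> distinct vs \<and> set vs \<subseteq> verts G \<and>
     length es + 1 = length vs \<and>
     (\<forall>i < length es. es ! i \<in> edges G \<and> ends G (es ! i) = {vs ! i, vs ! Suc i})"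

definition path_between :: "('v, 'e) mgraph \<Rightarrow> 'v \<Rightarrow> 'v \<Rightarrow> 'v list \<Rightarrow> 'e list \<Rightarrow> bool" where
  "path_between G u v vs es \<longleftrightarrow> is_path G vs es \<and> hd vs = u \<and> last vs = v"

definition shortest_path :: "('v, 'e) mgraph \<Rightarrow> 'v \<Rightarrow> 'v \<Rightarrow> 'v list \<Rightarrow> 'e list \<Rightarrow> bool" where
  "shortest_path G u v vs es \<longleftrightarrow> path_between G u v vs es \<and>
     (\<forall>vs' es'. path_between G u v vs' es' \<longrightarrow> length vs \<le> length vs')"

definition unique_shortest_path :: "('v, 'e) mgraph \<Rightarrow> 'v list \<Rightarrow> 'e list \<Rightarrow> bool" where
  "unique_shortest_path G vs es \<longleftrightarrow> (\<exists>u v. shortest_path G u v vs es \<and>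
     (\<forall>vs' es'. path_between G u v vs' es' \<and> length vs' = length vs \<longrightarrow> vs' = vs \<and> es' = es))"

definition usp :: "('v, 'e) mgraph \<Rightarrow> nat" where
  "usp G = Max {length vs | vs es. unique_shortest_path G vs es}"

definition sp :: "('v, 'e) mgraph \<Rightarrow> nat" where
  "sp G = card (verts G) - usp G"

definition minor_step :: "('v, 'e) mgraph \<Rightarrow> ('v, 'e) mgraph \<Rightarrow> bool" where
  "minor_step H H' \<longleftrightarrow>
     (\<exists>x\<in>verts H. (\<forall>e\<in>edges H. x \<notin> ends H e) \<and>
        H' = \<lparr>verts = verts H - {x}, edges = edges H, ends = ends H\<rparr>)
   \<or> (\<exists>e\<in>edges H. H' = \<lparr>verts = verts H, edges = edges H - {e}, ends = ends H\<rparr>)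
   \<or> (\<exists>e\<in>edges H. \<exists>u w. ends H e = {u, w} \<and> u \<noteq> w \<and>
        (\<forall>f\<in>edges H. f \<noteq> e \<longrightarrow> ends H f \<noteq> ends H e) \<and>
        H' = \<lparr>verts = verts H - {w}, edges = edges H - {e},
               ends = (\<lambda>f. (\<lambda>x. if x = w then u else x) ` ends H f)\<rparr>)"

definition graph_iso :: "('v, 'e) mgraph \<Rightarrow> ('w, 'f) mgraph \<Rightarrow> bool" where
  "graph_iso A B \<longleftrightarrow> (\<exists>f g. bij_betw f (verts A) (verts B) \<and> bij_betw g (edges A) (edges B) \<and>
     (\<forall>e\<in>edges A. ends B (g e) = f ` ends A e))"

definition is_minor :: "('v, 'e) mgraph \<Rightarrow> ('w, 'f) mgraph \<Rightarrow> bool" where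
  "is_minor G H \<longleftrightarrow> (\<exists>H'. minor_step\<^sup>*\<^sup>* H H' \<and> graph_iso H' G)"

text \<open>Spectator floor; hosts H range over graphs on nat (every finite graph
is isomorphic to one).\<close>

definition sp_floor :: "('v, 'e) mgraph \<Rightarrow> nat" where
  "sp_floor G = Inf {sp H | H :: (nat, nat) mgraph. wf_graph H \<and> is_minor G H}"

definition induced :: "('v, 'e) mgraph \<Rightarrow> 'v set \<Rightarrow> ('v, 'e) mgraph" where
  "induced G S = \<lparr>verts = S, edges = {e\<in>edges G. ends G e \<subseteq> S}, ends = ends G\<rparr>"

end

theory Submission
  imports Defs
begin

definition adj :: "('v,'e) mgraph \<Rightarrow> 'v set \<Rightarrow> 'v \<Rightarrow> 'v \<Rightarrow> bool" where
  "adj H S a b \<longleftrightarrow> a \<in> S \<and> b \<in> S \<and> (\<exists>g\<in>edges H. ends H g = {a,b})"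

definition conn :: "('v,'e) mgraph \<Rightarrow> 'v set \<Rightarrow> bool" where
  "conn H S \<longleftrightarrow> (\<forall>a\<in>S. \<forall>b\<in>S. (adj H S)\<^sup>*\<^sup>* a b)"

definition gwf :: "('v,'e) mgraph \<Rightarrow> bool" where
  "gwf H \<longleftrightarrow> finite (verts H) \<and> finite (edges H) \<and>
     (\<forall>e\<in>edges H. ends H e \<subseteq> verts H \<and> card (ends H e) = 2)"

definition model :: "('v,'e) mgraph \<Rightarrow> ('w,'f) mgraph \<Rightarrow> ('v \<Rightarrow> 'w set) \<Rightarrow> ('e \<Rightarrow> 'f) \<Rightarrow> bool" where
  "model G H \<beta> \<eta> \<longleftrightarrow>
    (\<forall>v\<in>verts G. \<beta> v \<noteq> {} \<and> \<beta> v \<subseteq> verts H \<and> conn H (\<beta> v)) \<and>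
    (\<forall>v\<in>verts G. \<forall>w\<in>verts G. v \<noteq> w \<longrightarrow> \<beta> v \<inter> \<beta> w = {}) \<and>
    inj_on \<eta> (edges G) \<and> \<eta> ` edges G \<subseteq> edges H \<and>
    (\<forall>e\<in>edges G. \<forall>x\<in>ends G e. ends H (\<eta> e) \<inter> \<beta> x \<noteq> {}) \<and>
    (\<forall>e\<in>edges G. ends H (\<eta> e) \<subseteq> (\<Union>x\<in>ends G e. \<beta> x))"

lemma rtranclp_map:
  assumes "R\<^sup>*\<^sup>* a b" and "\<And>c d. R c d \<Longrightarrow> Q\<^sup>*\<^sup>* (f c) (f d)"
  shows "Q\<^sup>*\<^sup>* (f a) (f b)"
  using assms(1) by induction (auto intro: rtranclp_trans assms(2))

lemma rtranclp_neq_step: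
  assumes "R\<^sup>*\<^sup>* a b" "a \<noteq> b" shows "\<exists>c d. R c d \<and> c \<noteq> d"
  using assms by induction auto

lemma adj_sym: "adj H S a b \<Longrightarrow> adj H S b a"
  unfolding adj_def by (auto simp: insert_commute)

lemma card2_E: "card A = 2 \<Longrightarrow> \<exists>a b. A = {a,b} \<and> a \<noteq> b"
  by (metis card_2_iff)

lemma conn_mono:
  assumes "conn H S" "\<And>c d. adj H S c d \<Longrightarrow> adj H' S c d"
  shows "conn H' S"
  using assms unfolding conn_def by (metis mono_rtranclp)

lemma conn_map:
  assumes "conn H S" "\<And>c d. adj H S c d \<Longrightarrow> f c = f d \<or> adj H' (f ` S) (f c) (f d)"
  shows "conn H' (f ` S)"
  unfolding conn_def
proof (intro ballI)
  fix a' b' assume "a' \<in> f ` S" "b' \<in> f ` S"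
  then obtain a b where ab: "a \<in> S" "b \<in> S" "a' = f a" "b' = f b" by blast
  have "(adj H S)\<^sup>*\<^sup>* a b" using assms(1) ab unfolding conn_def by blast
  then have "(adj H' (f ` S))\<^sup>*\<^sup>* (f a) (f b)"
    by (rule rtranclp_map) (metis assms(2) r_into_rtranclp rtranclp.rtrancl_refl)
  then show "(adj H' (f ` S))\<^sup>*\<^sup>* a' b'" using ab by simp
qed

lemma conn_single: "conn H {a}"
  unfolding conn_def by simp

lemma conn_two:
  assumes "conn H S" "a \<in> S" "b \<in> S" "a \<noteq> b"
  shows "\<exists>f\<in>edges H. \<exists>c d. ends H f = {c,d} \<and> c \<in> S \<and> d \<in> S \<and> c \<noteq> d"
proof -
  have "(adj H S)\<^sup>*\<^sup>* a b" using assms unfolding conn_def by blast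
  from rtranclp_neq_step[OF this assms(4)] obtain c d where "adj H S c d" "c \<noteq> d" by blast
  then show ?thesis unfolding adj_def by blast
qed


lemma modelD:
  assumes "model G H \<beta> \<eta>"
  shows model_ne: "v \<in> verts G \<Longrightarrow> \<beta> v \<noteq> {}"
    and model_sub: "v \<in> verts G \<Longrightarrow> \<beta> v \<subseteq> verts H"
    and model_conn: "v \<in> verts G \<Longrightarrow> conn H (\<beta> v)"
    and model_disj: "v \<in> verts G \<Longrightarrow> w \<in> verts G \<Longrightarrow> v \<noteq> w \<Longrightarrow> \<beta> v \<inter> \<beta> w = {}"
    and model_inj: "inj_on \<eta> (edges G)"
    and model_edges: "\<eta> ` edges G \<subseteq> edges H"
    and model_ends1: "e \<in> edges G \<Longrightarrow> x \<in> ends G e \<Longrightarrow> ends H (\<eta> e) \<inter> \<beta> x \<noteq> {}"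
    and model_ends2: "e \<in> edges G \<Longrightarrow> ends H (\<eta> e) \<subseteq> (\<Union>x\<in>ends G e. \<beta> x)"
  using assms unfolding model_def by (elim conjE; simp)+

lemma modelI:
  assumes "\<And>v. v \<in> verts G \<Longrightarrow> \<beta> v \<noteq> {}"
    "\<And>v. v \<in> verts G \<Longrightarrow> \<beta> v \<subseteq> verts H"
    "\<And>v. v \<in> verts G \<Longrightarrow> conn H (\<beta> v)"
    "\<And>v w. v \<in> verts G \<Longrightarrow> w \<in> verts G \<Longrightarrow> v \<noteq> w \<Longrightarrow> \<beta> v \<inter> \<beta> w = {}"
    "inj_on \<eta> (edges G)"
    "\<eta> ` edges G \<subseteq> edges H"
    "\<And>e x. e \<in> edges G \<Longrightarrow> x \<in> ends G e \<Longrightarrow> ends H (\<eta> e) \<inter> \<beta> x \<noteq> {}"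
    "\<And>e. e \<in> edges G \<Longrightarrow> ends H (\<eta> e) \<subseteq> (\<Union>x\<in>ends G e. \<beta> x)"
  shows "model G H \<beta> \<eta>"
  unfolding model_def using assms by (intro conjI ballI impI) auto

lemma model_not_eta:
  assumes "model G H \<beta> \<eta>" "\<forall>e\<in>edges G. ends G e \<subseteq> verts G \<and> card (ends G e) = 2"
    "v \<in> verts G" "ends H f \<subseteq> \<beta> v"
  shows "f \<notin> \<eta> ` edges G"
proof
  assume "f \<in> \<eta> ` edges G"
  then obtain e where e: "e \<in> edges G" "f = \<eta> e" by blast
  then obtain x y where xy: "ends G e = {x,y}" "x \<noteq> y" using assms(2) card2_E by metis
  have xy': "x \<in> verts G" "y \<in> verts G" using assms(2) e xy by auto
  have "ends H f \<inter> \<beta> x \<noteq> {}" "ends H f \<inter> \<beta> y \<noteq> {}" using assms(1) e xy unfolding model_def by auto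
  then have "\<beta> v \<inter> \<beta> x \<noteq> {}" "\<beta> v \<inter> \<beta> y \<noteq> {}" using assms(4) by auto
  then have "v = x" "v = y" using assms(1) xy' assms(3) unfolding model_def by blast+
  then show False using xy by simp
qed

lemma model_transfer:
  assumes "model G H \<beta> \<eta>" "\<forall>v\<in>verts G. \<beta> v \<subseteq> verts H'" "\<eta> ` edges G \<subseteq> edges H'"
    "\<forall>e\<in>edges G. ends H' (\<eta> e) = ends H (\<eta> e)"
    "\<forall>v\<in>verts G. \<forall>c d. adj H (\<beta> v) c d \<longrightarrow> adj H' (\<beta> v) c d"
  shows "model G H' \<beta> \<eta>"
  using assms unfolding model_def by (auto intro: conn_mono)

lemma is_minor_step:
  assumes "minor_step H H'" "is_minor G H'" shows "is_minor G H"
  using assms unfolding is_minor_def by (meson converse_rtranclp_into_rtranclp)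

lemma del_edge_step:
  assumes "f \<in> edges H"
  shows "minor_step H \<lparr>verts = verts H, edges = edges H - {f}, ends = ends H\<rparr>"
  using assms unfolding minor_step_def by blast

lemma del_vert_step:
  assumes "x \<in> verts H" "\<forall>e\<in>edges H. x \<notin> ends H e"
  shows "minor_step H \<lparr>verts = verts H - {x}, edges = edges H, ends = ends H\<rparr>"
  using assms unfolding minor_step_def by blast

lemma contract_step:
  assumes "f \<in> edges H" "ends H f = {a, b}" "a \<noteq> b"
    "\<forall>g\<in>edges H. g \<noteq> f \<longrightarrow> ends H g \<noteq> ends H f"
  shows "minor_step H \<lparr>verts = verts H - {b}, edges = edges H - {f},
               ends = (\<lambda>g. (\<lambda>x. if x = b then a else x) ` ends H g)\<rparr>"
  using assms unfolding minor_step_def by blast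

lemma card_minus_one_less: "finite A \<Longrightarrow> x \<in> A \<Longrightarrow> card A - Suc 0 < card A"
  by (metis card_gt_0_iff diff_Suc_less empty_iff)

lemma model_to_minor:
  assumes "gwf H" "model G H \<beta> \<eta>" and GW: "\<forall>e\<in>edges G. ends G e \<subseteq> verts G \<and> card (ends G e) = 2"
  shows "is_minor G H"
  using assms(1,2)
proof (induction "card (verts H) + card (edges H)" arbitrary: H \<beta> rule: less_induct)
  case less
  note M = less.prems(2)
  have fin: "finite (verts H)" "finite (edges H)" using less.prems(1) unfolding gwf_def by auto
  show ?case
  proof (cases "\<exists>f\<in>edges H. f \<notin> \<eta> ` edges G")
    case True
    then obtain f where f: "f \<in> edges H" "f \<notin> \<eta> ` edges G" by blast
    define Hd where "Hd = \<lparr>verts = verts H, edges = edges H - {f}, ends = ends H\<rparr>"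
    have dstep: "minor_step H Hd" unfolding Hd_def by (rule del_edge_step[OF f(1)])
    have dgwf: "gwf Hd" using less.prems(1) unfolding gwf_def Hd_def by auto
    have dless: "card (verts Hd) + card (edges Hd) < card (verts H) + card (edges H)"
      using f fin unfolding Hd_def by (simp add: card_Diff1_less card_minus_one_less)
    show ?thesis
    proof (cases "\<exists>g\<in>edges H. g \<noteq> f \<and> ends H g = ends H f")
      case True
      then obtain g where g: "g \<in> edges H" "g \<noteq> f" "ends H g = ends H f" by blast
      have "model G Hd \<beta> \<eta>"
        apply (rule model_transfer[OF M])
        using modelD(1-2)[OF M] model_edges[OF M] f g unfolding Hd_def adj_def
        by (simp_all add: subset_Diff_insert) (metis Diff_iff singletonD)
      then show ?thesis using less.hyps[OF dless dgwf] dstep is_minor_step by blast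
    next
      case False
      note nopar = this
      show ?thesis
      proof (cases "\<exists>v\<in>verts G. ends H f \<subseteq> \<beta> v")
        case True
        then obtain v where v: "v \<in> verts G" "ends H f \<subseteq> \<beta> v" by blast
        obtain a b where ab: "ends H f = {a,b}" "a \<noteq> b"
          using less.prems(1) f card2_E unfolding gwf_def by metis
        have abv: "a \<in> \<beta> v" "b \<in> \<beta> v" using v ab by auto
        have abH: "a \<in> verts H" "b \<in> verts H" using less.prems(1) f ab unfolding gwf_def by auto
        define \<phi> where "\<phi> = (\<lambda>x. if x = b then a else x)"
        define Hc where "Hc = \<lparr>verts = verts H - {b}, edges = edges H - {f},
               ends = (\<lambda>g. \<phi> ` ends H g)\<rparr>"
        have cstep: "minor_step H Hc" unfolding Hc_def \<phi>_def
          by (rule contract_step) (use f ab nopar in auto)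
        have cless: "card (verts Hc) + card (edges Hc) < card (verts H) + card (edges H)"
          using f fin abH unfolding Hc_def by (simp add: card_Diff1_less add_less_mono card_minus_one_less)
        have phib: "\<phi> x \<noteq> b" for x using ab unfolding \<phi>_def by auto
        have cgwf: "gwf Hc"
          unfolding gwf_def
        proof (intro conjI ballI)
          show "finite (verts Hc)" "finite (edges Hc)" using fin unfolding Hc_def by auto
        next
          fix g assume g: "g \<in> edges Hc"
          then have g': "g \<in> edges H" "g \<noteq> f" unfolding Hc_def by auto
          obtain c d where cd: "ends H g = {c,d}" "c \<noteq> d"
            using less.prems(1) g' card2_E unfolding gwf_def by metis
          have "ends H g \<subseteq> verts H" using less.prems(1) g' unfolding gwf_def by auto
          then show "ends Hc g \<subseteq> verts Hc" using abH phib unfolding Hc_def \<phi>_def by auto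
          have "\<phi> c \<noteq> \<phi> d"
          proof
            assume "\<phi> c = \<phi> d"
            then have "ends H g = {a,b}" using cd ab unfolding \<phi>_def
              by (cases "c = b"; cases "d = b") (auto simp: insert_commute)
            then show False using nopar g' ab by auto
          qed
          then show "card (ends Hc g) = 2" using cd unfolding Hc_def by auto
        qed
        define \<beta>' where "\<beta>' = \<beta>(v := \<beta> v - {b})"
        have disj: "\<beta> x \<inter> \<beta> y = {}" if "x \<in> verts G" "y \<in> verts G" "x \<noteq> y" for x y
          using model_disj[OF M that] .
        have bnot: "b \<notin> \<beta> x" "a \<notin> \<beta> x" if "x \<in> verts G" "x \<noteq> v" for x
          using disj[OF that(1) v(1) that(2)] abv by auto
        have K: "\<phi> c \<in> \<beta>' x" if "c \<in> \<beta> x" "x \<in> verts G" for c x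
        proof (cases "x = v")
          case True
          then show ?thesis using that abv ab unfolding \<phi>_def \<beta>'_def by simp
        next
          case False
          then have "c \<noteq> b" using bnot that by blast
          then show ?thesis using that False unfolding \<phi>_def \<beta>'_def by simp
        qed
        have phiimg: "\<phi> ` \<beta> x = \<beta>' x" if "x \<in> verts G" for x
        proof (cases "x = v")
          case True
          have "\<phi> ` \<beta> v = \<beta> v - {b}"
          proof
            show "\<phi> ` \<beta> v \<subseteq> \<beta> v - {b}" using abv phib unfolding \<phi>_def by auto
            show "\<beta> v - {b} \<subseteq> \<phi> ` \<beta> v"
            proof
              fix y assume y: "y \<in> \<beta> v - {b}"
              then have "\<phi> y = y" unfolding \<phi>_def by simp
              then show "y \<in> \<phi> ` \<beta> v" using y by (metis DiffD1 imageI)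
            qed
          qed
          then show ?thesis using True unfolding \<beta>'_def by simp
        next
          case False
          then show ?thesis using bnot[OF that False] unfolding \<beta>'_def \<phi>_def by (auto simp: image_iff)
        qed
        have adjc: "\<phi> c = \<phi> d \<or> adj Hc (\<phi> ` S) (\<phi> c) (\<phi> d)" if a: "adj H S c d" for S c d
        proof -
          obtain g where g: "g \<in> edges H" "ends H g = {c,d}" "c \<in> S" "d \<in> S"
            using a unfolding adj_def by blast
          show ?thesis
          proof (cases "g = f")
            case True
            then have "{c,d} = {a,b}" using g ab by simp
            then have "c \<in> {a,b}" "d \<in> {a,b}" by auto
            then have "\<phi> c = a" "\<phi> d = a" unfolding \<phi>_def by auto
            then show ?thesis by simp
          next
            case False
            then show ?thesis using g unfolding adj_def Hc_def by auto
          qed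
        qed
        have "model G Hc \<beta>' \<eta>"
        proof (rule modelI)
          fix x assume x: "x \<in> verts G"
          show "\<beta>' x \<noteq> {}" using model_ne[OF M x] abv ab unfolding \<beta>'_def by auto
          show "\<beta>' x \<subseteq> verts Hc" using model_sub[OF M x] bnot[OF x] unfolding \<beta>'_def Hc_def by auto
          have "conn Hc (\<phi> ` \<beta> x)"
            by (rule conn_map[OF model_conn[OF M x]]) (rule adjc)
          then show "conn Hc (\<beta>' x)" using phiimg[OF x] by simp
        next
          fix x y assume "x \<in> verts G" "y \<in> verts G" "x \<noteq> y"
          then show "\<beta>' x \<inter> \<beta>' y = {}" using disj unfolding \<beta>'_def by auto
        next
          show "inj_on \<eta> (edges G)" using model_inj[OF M] .
          show "\<eta> ` edges G \<subseteq> edges Hc" using model_edges[OF M] f unfolding Hc_def by auto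
        next
          fix e x assume e: "e \<in> edges G" and x: "x \<in> ends G e"
          then have xv: "x \<in> verts G" using GW by auto
          obtain c where "c \<in> ends H (\<eta> e)" "c \<in> \<beta> x" using model_ends1[OF M e x] by blast
          then show "ends Hc (\<eta> e) \<inter> \<beta>' x \<noteq> {}" using K[OF _ xv] unfolding Hc_def by auto
        next
          fix e assume e: "e \<in> edges G"
          show "ends Hc (\<eta> e) \<subseteq> (\<Union>x\<in>ends G e. \<beta>' x)"
          proof
            fix c' assume "c' \<in> ends Hc (\<eta> e)"
            then obtain c where c: "c \<in> ends H (\<eta> e)" "c' = \<phi> c" unfolding Hc_def by auto
            then obtain x where "x \<in> ends G e" "c \<in> \<beta> x" using model_ends2[OF M e] by blast
            then show "c' \<in> (\<Union>x\<in>ends G e. \<beta>' x)" using K c GW e by blast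
          qed
        qed
        then show ?thesis using less.hyps[OF cless cgwf] cstep is_minor_step by blast
      next
        case False
        have "model G Hd \<beta> \<eta>"
          apply (rule model_transfer[OF M])
          using modelD(1-2)[OF M] model_edges[OF M] f False unfolding Hd_def adj_def
          apply (simp_all add: subset_Diff_insert)
          apply (intro ballI allI impI)
          apply (elim conjE bexE)
          subgoal for v c d g
            by (rule bexI[of _ g]) (auto simp: insert_subset)
          done
        then show ?thesis using less.hyps[OF dless dgwf] dstep is_minor_step by blast
      qed
    qed
  next
    case False
    then have alle: "edges H = \<eta> ` edges G" using model_edges[OF M] by blast
    show ?thesis
    proof (cases "\<exists>x\<in>verts H. x \<notin> (\<Union>v\<in>verts G. \<beta> v)")
      case True
      then obtain x where x: "x \<in> verts H" "x \<notin> (\<Union>v\<in>verts G. \<beta> v)" by blast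
      have iso: "\<forall>e\<in>edges H. x \<notin> ends H e"
      proof
        fix e assume "e \<in> edges H"
        then obtain e0 where "e0 \<in> edges G" "e = \<eta> e0" using alle by blast
        then have "ends H e \<subseteq> (\<Union>v\<in>verts G. \<beta> v)" using model_ends2[OF M] GW by blast
        then show "x \<notin> ends H e" using x by blast
      qed
      define Hv where "Hv = \<lparr>verts = verts H - {x}, edges = edges H, ends = ends H\<rparr>"
      have vstep: "minor_step H Hv" unfolding Hv_def by (rule del_vert_step[OF x(1) iso])
      have vgwf: "gwf Hv" using less.prems(1) iso unfolding gwf_def Hv_def by auto
      have vless: "card (verts Hv) + card (edges Hv) < card (verts H) + card (edges H)"
        using x fin unfolding Hv_def by (simp add: card_Diff1_less card_minus_one_less)
      have "model G Hv \<beta> \<eta>"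
        apply (rule model_transfer[OF M])
        subgoal
        proof (intro ballI)
          fix v assume v: "v \<in> verts G"
          have "\<beta> v \<subseteq> verts H" by (rule model_sub[OF M v])
          moreover have "x \<notin> \<beta> v" using x(2) v by blast
          ultimately show "\<beta> v \<subseteq> verts Hv" unfolding Hv_def by auto
        qed
        subgoal using model_edges[OF M] unfolding Hv_def by simp
        subgoal unfolding Hv_def by simp
        subgoal unfolding Hv_def adj_def by simp
        done
      then show ?thesis using less.hyps[OF vless vgwf] vstep is_minor_step by blast
    next
      case False
      then have allv: "verts H = (\<Union>v\<in>verts G. \<beta> v)" using model_sub[OF M] by blast
      have sing: "\<exists>r. \<beta> v = {r}" if v: "v \<in> verts G" for v
      proof (rule ccontr)
        assume ns: "\<nexists>r. \<beta> v = {r}"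
        obtain a where a: "a \<in> \<beta> v" using model_ne[OF M v] by blast
        have "\<beta> v \<noteq> {a}" using ns by blast
        then obtain b where b: "b \<in> \<beta> v" "b \<noteq> a" using a by blast
        obtain f c d where f: "f \<in> edges H" "ends H f = {c,d}" "c \<in> \<beta> v" "d \<in> \<beta> v"
          using conn_two[OF model_conn[OF M v] a b(1)] b(2) by blast
        have "ends H f \<subseteq> \<beta> v" using f by simp
        then have "f \<notin> \<eta> ` edges G" by (rule model_not_eta[OF M GW v])
        then show False using f(1) alle by simp
      qed
      define r where "r v = the_elem (\<beta> v)" for v
      have br: "\<beta> v = {r v}" if v: "v \<in> verts G" for v
      proof -
        obtain r0 where "\<beta> v = {r0}" using sing[OF v] by blast
        then show ?thesis unfolding r_def by simp
      qed
      have "(\<Union>v\<in>verts G. \<beta> v) = (\<Union>v\<in>verts G. {r v})" by (rule SUP_cong[OF refl]) (rule br)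
      also have "\<dots> = r ` verts G" by blast
      finally have vH: "verts H = r ` verts G" using allv by simp
      have injr: "inj_on r (verts G)"
      proof (rule inj_onI)
        fix x y
        assume xy: "x \<in> verts G" "y \<in> verts G" "r x = r y"
        show "x = y"
        proof (rule ccontr)
          assume "x \<noteq> y"
          then have "\<beta> x \<inter> \<beta> y = {}" using model_disj[OF M] xy(1,2) by blast
          then show False using br[OF xy(1)] br[OF xy(2)] xy(3) by simp
        qed
      qed
      have endsr: "ends H (\<eta> e) = r ` ends G e" if e: "e \<in> edges G" for e
      proof
        show "ends H (\<eta> e) \<subseteq> r ` ends G e"
        proof
          fix c assume "c \<in> ends H (\<eta> e)"
          then obtain x where x: "x \<in> ends G e" "c \<in> \<beta> x" using model_ends2[OF M e] by blast
          then have "x \<in> verts G" using GW e by auto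
          then show "c \<in> r ` ends G e" using x br by auto
        qed
        show "r ` ends G e \<subseteq> ends H (\<eta> e)"
        proof
          fix y assume "y \<in> r ` ends G e"
          then obtain x where x: "x \<in> ends G e" "y = r x" by blast
          then have "x \<in> verts G" using GW e by auto
          then have "ends H (\<eta> e) \<inter> {r x} \<noteq> {}" using model_ends1[OF M e x(1)] br by simp
          then show "y \<in> ends H (\<eta> e)" using x by auto
        qed
      qed
      have injeta: "inj_on \<eta> (edges G)" using model_inj[OF M] .
      have "graph_iso H G"
        unfolding graph_iso_def
      proof (intro exI conjI ballI)
        show "bij_betw (inv_into (verts G) r) (verts H) (verts G)"
          using bij_betw_inv_into[OF inj_on_imp_bij_betw[OF injr]] vH by simp
        show "bij_betw (inv_into (edges G) \<eta>) (edges H) (edges G)"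
          using bij_betw_inv_into[OF inj_on_imp_bij_betw[OF injeta]] alle by simp
      next
        fix e' assume "e' \<in> edges H"
        then obtain e where e: "e \<in> edges G" "e' = \<eta> e" using alle by blast
        have "inv_into (verts G) r ` ends H e' = inv_into (verts G) r ` r ` ends G e"
          using endsr e by simp
        also have "\<dots> = ends G e" using GW e injr by (simp add: inv_into_image_cancel)
        finally show "ends G (inv_into (edges G) \<eta> e') = inv_into (verts G) r ` ends H e'"
          using e injeta by simp
      qed
      then show ?thesis unfolding is_minor_def by (intro exI[of _ H] conjI rtranclp.rtrancl_refl)
    qed
  qed
qed

lemma adj_rtranclp_sym: "(adj H S)\<^sup>*\<^sup>* a b \<Longrightarrow> (adj H S)\<^sup>*\<^sup>* b a"
proof (induction rule: rtranclp_induct)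
  case base then show ?case by simp
next
  case (step y z)
  have "adj H S z y" using step(2) by (rule adj_sym)
  then show ?case using step(3) by (meson converse_rtranclp_into_rtranclp)
qed

lemma contract_gwf:
  assumes "gwf H" "e \<in> edges H" "ends H e = {u, w}" "u \<noteq> w"
    "\<forall>f\<in>edges H. f \<noteq> e \<longrightarrow> ends H f \<noteq> ends H e"
  shows "gwf \<lparr>verts = verts H - {w}, edges = edges H - {e},
               ends = (\<lambda>f. (\<lambda>x. if x = w then u else x) ` ends H f)\<rparr>" (is "gwf ?K")
  unfolding gwf_def
proof (intro conjI ballI)
  show "finite (verts ?K)" "finite (edges ?K)" using assms(1) unfolding gwf_def by auto
next
  fix g assume g: "g \<in> edges ?K"
  then have g': "g \<in> edges H" "g \<noteq> e" by auto
  obtain c d where cd: "ends H g = {c,d}" "c \<noteq> d"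
    using assms(1) g' card2_E unfolding gwf_def by metis
  have uH: "u \<in> verts H" using assms(1-3) unfolding gwf_def by blast
  have "ends H g \<subseteq> verts H" using assms(1) g' unfolding gwf_def by blast
  then show "ends ?K g \<subseteq> verts ?K" using uH assms(4) by auto
  have "(if c = w then u else c) \<noteq> (if d = w then u else d)"
  proof
    assume "(if c = w then u else c) = (if d = w then u else d)"
    then have "ends H g = {u,w}" using cd by (cases "c = w"; cases "d = w") (auto simp: insert_commute)
    then show False using assms(3,5) g' by auto
  qed
  moreover have "ends ?K g = {(if c = w then u else c), (if d = w then u else d)}"
    by (simp only: mgraph.select_convs cd image_insert image_empty)
  ultimately show "card (ends ?K g) = 2" by simp
qed

lemma minor_step_gwf:
  assumes "gwf H" "minor_step H K" shows "gwf K"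
  using assms(2) unfolding minor_step_def
proof (elim disjE bexE exE conjE)
  fix x assume "x \<in> verts H" "\<forall>e\<in>edges H. x \<notin> ends H e"
    "K = \<lparr>verts = verts H - {x}, edges = edges H, ends = ends H\<rparr>"
  then show "gwf K" using assms(1) unfolding gwf_def by auto
next
  fix e assume "e \<in> edges H" "K = \<lparr>verts = verts H, edges = edges H - {e}, ends = ends H\<rparr>"
  then show "gwf K" using assms(1) unfolding gwf_def by auto
next
  fix e u w assume "e \<in> edges H" "ends H e = {u, w}" "u \<noteq> w"
    "\<forall>f\<in>edges H. f \<noteq> e \<longrightarrow> ends H f \<noteq> ends H e"
    "K = \<lparr>verts = verts H - {w}, edges = edges H - {e},
               ends = (\<lambda>f. (\<lambda>x. if x = w then u else x) ` ends H f)\<rparr>"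
  then show "gwf K" using contract_gwf[OF assms(1)] by simp
qed

lemma model_back_contract:
  assumes gH: "gwf H" and e: "e \<in> edges H" "ends H e = {u, w}" "u \<noteq> w"
    and K: "K = \<lparr>verts = verts H - {w}, edges = edges H - {e},
               ends = (\<lambda>f. (\<lambda>x. if x = w then u else x) ` ends H f)\<rparr>"
    and M: "model G K \<beta> \<eta>"
  shows "\<exists>\<beta>'. model G H \<beta>' \<eta>"
proof -
  define \<phi> where "\<phi> = (\<lambda>x. if x = w then u else x)"
  have endsK: "ends K g = \<phi> ` ends H g" for g unfolding K \<phi>_def by simp
  have edgesK: "edges K = edges H - {e}" unfolding K by simp
  have vertsK: "verts K = verts H - {w}" unfolding K by simp
  define \<beta>' where "\<beta>' x = (if u \<in> \<beta> x then insert w (\<beta> x) else \<beta> x)" for x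
  have wnot: "w \<notin> \<beta> x" if "x \<in> verts G" for x using model_sub[OF M that] vertsK by blast
  have wH: "w \<in> verts H" "u \<in> verts H" using gH e unfolding gwf_def by blast+
  have L: "c \<in> \<beta>' x" if "\<phi> c \<in> \<beta> x" for c x
    using that unfolding \<phi>_def \<beta>'_def by (cases "c = w") auto
  have L2: "\<phi> c \<in> \<beta> x" if "c \<in> \<beta>' x" "x \<in> verts G" for c x
  proof (cases "c = w")
    case True
    then have "u \<in> \<beta> x" using that wnot[OF that(2)] unfolding \<beta>'_def by (auto split: if_splits)
    then show ?thesis using True unfolding \<phi>_def by simp
  next
    case False
    then have "c \<in> \<beta> x" using that unfolding \<beta>'_def by (auto split: if_splits)
    then show ?thesis using False unfolding \<phi>_def by simp
  qed
  have sub: "\<beta> x \<subseteq> \<beta>' x" for x unfolding \<beta>'_def by auto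
  have step1: "(adj H (\<beta>' x))\<^sup>*\<^sup>* c (\<phi> c)" if "c \<in> \<beta>' x" "x \<in> verts G" for c x
  proof (cases "c = w")
    case True
    then have "u \<in> \<beta> x" using L2[OF that] unfolding \<phi>_def by simp
    then have "adj H (\<beta>' x) w u" using e sub that True unfolding adj_def by (auto simp: insert_commute)
    then show ?thesis using True unfolding \<phi>_def by auto
  next
    case False then show ?thesis unfolding \<phi>_def by simp
  qed
  have step2: "(adj H (\<beta>' x))\<^sup>*\<^sup>* c d" if adjc: "adj K (\<beta> x) c d" and xv: "x \<in> verts G" for c d x
  proof -
    obtain g where g: "g \<in> edges K" "ends K g = {c,d}" "c \<in> \<beta> x" "d \<in> \<beta> x"
      using adjc unfolding adj_def by blast
    have gH: "g \<in> edges H" using g(1) edgesK by simp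
    obtain p q where pq: "ends H g = {p,q}" using gH gH[THEN \<open>gwf H\<close>[unfolded gwf_def, THEN conjunct2, THEN conjunct2, rule_format]] card2_E by metis
    have img: "{\<phi> p, \<phi> q} = {c,d}" using g(2) pq endsK by simp
    have pqS: "p \<in> \<beta>' x" "q \<in> \<beta>' x"
      using img g(3,4) L by (auto simp: doubleton_eq_iff)
    have a1: "adj H (\<beta>' x) p q" using pqS gH pq unfolding adj_def by blast
    have a2: "adj H (\<beta>' x) q p" using a1 by (rule adj_sym)
    have s1: "(adj H (\<beta>' x))\<^sup>*\<^sup>* (\<phi> p) p" "(adj H (\<beta>' x))\<^sup>*\<^sup>* (\<phi> q) q"
      by (rule adj_rtranclp_sym[OF step1[OF pqS(1) xv]], rule adj_rtranclp_sym[OF step1[OF pqS(2) xv]])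
    have s2: "(adj H (\<beta>' x))\<^sup>*\<^sup>* p (\<phi> p)" "(adj H (\<beta>' x))\<^sup>*\<^sup>* q (\<phi> q)"
      by (rule step1[OF pqS(1) xv], rule step1[OF pqS(2) xv])
    consider "\<phi> p = c" "\<phi> q = d" | "\<phi> p = d" "\<phi> q = c" using img by (auto simp: doubleton_eq_iff)
    then show ?thesis
    proof cases
      case 1
      then show ?thesis using s1(1) a1 s2(2)
        by (metis rtranclp.rtrancl_into_rtrancl rtranclp_trans)
    next
      case 2
      then show ?thesis using s1(2) a2 s2(1)
        by (metis rtranclp.rtrancl_into_rtrancl rtranclp_trans)
    qed
  qed
  have "model G H \<beta>' \<eta>"
  proof (rule modelI)
    fix v assume v: "v \<in> verts G"
    show "\<beta>' v \<noteq> {}" using model_ne[OF M v] sub by blast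
    show "\<beta>' v \<subseteq> verts H" using model_sub[OF M v] vertsK wH unfolding \<beta>'_def by auto
    show "conn H (\<beta>' v)"
      unfolding conn_def
    proof (intro ballI)
      fix a b assume ab: "a \<in> \<beta>' v" "b \<in> \<beta>' v"
      have "(adj K (\<beta> v))\<^sup>*\<^sup>* (\<phi> a) (\<phi> b)"
        using model_conn[OF M v] L2[OF ab(1) v] L2[OF ab(2) v] unfolding conn_def by blast
      then have m: "(adj H (\<beta>' v))\<^sup>*\<^sup>* (\<phi> a) (\<phi> b)"
        using rtranclp_map[where f = id and Q = "adj H (\<beta>' v)"] step2[OF _ v] by auto
      have "(adj H (\<beta>' v))\<^sup>*\<^sup>* (\<phi> b) b" by (rule adj_rtranclp_sym[OF step1[OF ab(2) v]])
      then show "(adj H (\<beta>' v))\<^sup>*\<^sup>* a b" using step1[OF ab(1) v] m by (meson rtranclp_trans)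
    qed
  next
    fix v x assume "v \<in> verts G" "x \<in> verts G" "v \<noteq> x"
    then show "\<beta>' v \<inter> \<beta>' x = {}" using L2 model_disj[OF M] by blast
  next
    show "inj_on \<eta> (edges G)" by (rule model_inj[OF M])
    show "\<eta> ` edges G \<subseteq> edges H" using model_edges[OF M] edgesK by blast
  next
    fix e' x assume e': "e' \<in> edges G" "x \<in> ends G e'"
    obtain c' where "c' \<in> ends K (\<eta> e')" "c' \<in> \<beta> x" using model_ends1[OF M e'] by blast
    then obtain c where "c \<in> ends H (\<eta> e')" "\<phi> c \<in> \<beta> x" using endsK by auto
    then show "ends H (\<eta> e') \<inter> \<beta>' x \<noteq> {}" using L by blast
  next
    fix e' assume e': "e' \<in> edges G"
    show "ends H (\<eta> e') \<subseteq> (\<Union>x\<in>ends G e'. \<beta>' x)"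
    proof
      fix c assume "c \<in> ends H (\<eta> e')"
      then have "\<phi> c \<in> ends K (\<eta> e')" using endsK by simp
      then obtain x where "x \<in> ends G e'" "\<phi> c \<in> \<beta> x" using model_ends2[OF M e'] by blast
      then show "c \<in> (\<Union>x\<in>ends G e'. \<beta>' x)" using L by blast
    qed
  qed
  then show ?thesis by blast
qed

lemma model_back:
  assumes "gwf H" "minor_step H K" "model G K \<beta> \<eta>"
  shows "\<exists>\<beta>'. model G H \<beta>' \<eta>"
  using assms(2) unfolding minor_step_def
proof (elim disjE bexE exE conjE)
  fix x assume x: "x \<in> verts H" "\<forall>e\<in>edges H. x \<notin> ends H e"
    and K: "K = \<lparr>verts = verts H - {x}, edges = edges H, ends = ends H\<rparr>"
  have "model G H \<beta> \<eta>"
    apply (rule model_transfer[OF assms(3)])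
    subgoal using model_sub[OF assms(3)] unfolding K by auto
    subgoal using model_edges[OF assms(3)] unfolding K by simp
    subgoal unfolding K by simp
    subgoal unfolding K adj_def by simp
    done
  then show ?thesis by blast
next
  fix e assume e: "e \<in> edges H" and K: "K = \<lparr>verts = verts H, edges = edges H - {e}, ends = ends H\<rparr>"
  have "model G H \<beta> \<eta>"
    apply (rule model_transfer[OF assms(3)])
    subgoal using model_sub[OF assms(3)] unfolding K by simp
    subgoal using model_edges[OF assms(3)] unfolding K by auto
    subgoal unfolding K by simp
    subgoal unfolding K adj_def by auto
    done
  then show ?thesis by blast
next
  fix e u w assume "e \<in> edges H" "ends H e = {u, w}" "u \<noteq> w"
    "K = \<lparr>verts = verts H - {w}, edges = edges H - {e},
               ends = (\<lambda>f. (\<lambda>x. if x = w then u else x) ` ends H f)\<rparr>"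
  then show ?thesis using model_back_contract[OF assms(1)] assms(3) by blast
qed

lemma iso_model:
  assumes "gwf H" "graph_iso H G" and GW: "\<forall>e\<in>edges G. ends G e \<subseteq> verts G"
  shows "\<exists>\<beta> \<eta>. model G H \<beta> \<eta>"
proof -
  obtain f g where f: "bij_betw f (verts H) (verts G)" and g: "bij_betw g (edges H) (edges G)"
    and fg: "\<forall>e\<in>edges H. ends G (g e) = f ` ends H e"
    using assms(2) unfolding graph_iso_def by blast
  define fi where "fi = inv_into (verts H) f"
  define gi where "gi = inv_into (edges H) g"
  have fib: "bij_betw fi (verts G) (verts H)" unfolding fi_def by (rule bij_betw_inv_into[OF f])
  have gib: "bij_betw gi (edges G) (edges H)" unfolding gi_def by (rule bij_betw_inv_into[OF g])
  have endsH: "ends H (gi e) = fi ` ends G e" if e: "e \<in> edges G" for e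
  proof -
    have ge: "g (gi e) = e" unfolding gi_def using e g by (simp add: bij_betw_inv_into_right)
    have gie: "gi e \<in> edges H" using gib e by (simp add: bij_betw_apply)
    have "ends G e = f ` ends H (gi e)" using fg gie ge by metis
    moreover have "ends H (gi e) \<subseteq> verts H" using assms(1) gie unfolding gwf_def by blast
    ultimately show ?thesis unfolding fi_def using f
      by (simp add: bij_betw_def inv_into_image_cancel)
  qed
  have "model G H (\<lambda>v. {fi v}) gi"
  proof (rule modelI)
    fix v assume v: "v \<in> verts G"
    show "{fi v} \<noteq> {}" by simp
    show "{fi v} \<subseteq> verts H" using fib v by (simp add: bij_betw_apply)
    show "conn H {fi v}" by (rule conn_single)
  next
    fix v x assume "v \<in> verts G" "x \<in> verts G" "v \<noteq> x"
    then show "{fi v} \<inter> {fi x} = {}" using fib by (auto simp: bij_betw_def inj_on_def)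
  next
    show "inj_on gi (edges G)" using gib by (simp add: bij_betw_def)
    show "gi ` edges G \<subseteq> edges H" using gib by (simp add: bij_betw_def)
  next
    fix e x assume "e \<in> edges G" "x \<in> ends G e"
    then show "ends H (gi e) \<inter> {fi x} \<noteq> {}" using endsH by auto
  next
    fix e assume "e \<in> edges G"
    then show "ends H (gi e) \<subseteq> (\<Union>x\<in>ends G e. {fi x})" using endsH by auto
  qed
  then show ?thesis by blast
qed

lemma minor_model:
  assumes "gwf H" "is_minor G H" and GW: "\<forall>e\<in>edges G. ends G e \<subseteq> verts G"
  shows "\<exists>\<beta> \<eta>. model G H \<beta> \<eta>"
proof -
  obtain H' where H': "minor_step\<^sup>*\<^sup>* H H'" "graph_iso H' G" using assms(2) unfolding is_minor_def by blast
  have "gwf X \<longrightarrow> (\<exists>\<beta> \<eta>. model G X \<beta> \<eta>)" if "minor_step\<^sup>*\<^sup>* X H'" for X :: "('a,'b) mgraph"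
    using that
  proof (induction rule: converse_rtranclp_induct)
    case base
    then show ?case using iso_model H'(2) GW by blast
  next
    case (step y z)
    show ?case
    proof
      assume "gwf y"
      then have "gwf z" using step(1) minor_step_gwf by blast
      then obtain \<beta> \<eta> where "model G z \<beta> \<eta>" using step(3) by blast
      then show "\<exists>\<beta> \<eta>. model G y \<beta> \<eta>" using model_back[OF \<open>gwf y\<close> step(1)] by blast
    qed
  qed
  then show ?thesis using H'(1) assms(1) by blast
qed

lemma wf_gwf: "wf_graph H \<Longrightarrow> gwf H"
  unfolding wf_graph_def gwf_def by (elim conjE) (intro conjI)

lemma is_path_len:
  assumes "finite (verts H)" "is_path H vs es" shows "length vs \<le> card (verts H)"
proof -
  have "distinct vs" "set vs \<subseteq> verts H" using assms(2) unfolding is_path_def by simp_all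
  then have "card (set vs) \<le> card (verts H)" "card (set vs) = length vs"
    using card_mono[OF assms(1)] distinct_card by simp_all
  then show ?thesis by simp
qed

lemma usp_path: "unique_shortest_path H vs es \<Longrightarrow> is_path H vs es"
  unfolding unique_shortest_path_def shortest_path_def path_between_def by (elim exE conjE)

lemma usp_set_fin:
  assumes "finite (verts H)"
  shows "finite {length vs | vs es. unique_shortest_path H vs es}"
proof (rule finite_subset[of _ "{..card (verts H)}"])
  show "{length vs | vs es. unique_shortest_path H vs es} \<subseteq> {..card (verts H)}"
  proof
    fix n assume "n \<in> {length vs | vs es. unique_shortest_path H vs es}"
    then obtain vs es where "n = length vs" "unique_shortest_path H vs es" by blast
    then show "n \<in> {..card (verts H)}" using is_path_len[OF assms usp_path] by simp
  qed
qed simp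

lemma usp_single:
  assumes "v \<in> verts H" shows "unique_shortest_path H [v] []"
proof -
  have p: "path_between H v v [v] []" using assms unfolding path_between_def is_path_def by simp
  have le: "length [v] \<le> length vs'" if "path_between H v v vs' es'" for vs' es'
  proof -
    have "vs' \<noteq> []" using that unfolding path_between_def is_path_def by simp
    then show ?thesis by (cases vs') simp_all
  qed
  have "shortest_path H v v [v] []"
    unfolding shortest_path_def using p le by blast
  moreover have "vs' = [v] \<and> es' = []" if pb: "path_between H v v vs' es'" and l: "length vs' = length [v]" for vs' es'
  proof -
    have h: "hd vs' = v" "length es' + 1 = length vs'" using pb unfolding path_between_def is_path_def by simp_all
    obtain x where "vs' = [x]" using l by (cases vs') simp_all
    then show ?thesis using h l by simp
  qed
  ultimately show ?thesis unfolding unique_shortest_path_def by blast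
qed

lemma usp_ge:
  assumes "finite (verts H)" "unique_shortest_path H vs es" shows "length vs \<le> usp H"
proof -
  have "length vs \<in> {length vs | vs es. unique_shortest_path H vs es}" using assms(2) by blast
  then show ?thesis unfolding usp_def by (rule Max_ge[OF usp_set_fin[OF assms(1)]])
qed

lemma usp_ex:
  assumes "finite (verts H)" "verts H \<noteq> {}"
  shows "\<exists>vs es. unique_shortest_path H vs es \<and> length vs = usp H"
proof -
  obtain v where "v \<in> verts H" using assms(2) by blast
  then have "unique_shortest_path H [v] []" by (rule usp_single)
  then have ne: "{length vs | vs es. unique_shortest_path H vs es} \<noteq> {}" by blast
  have "usp H \<in> {length vs | vs es. unique_shortest_path H vs es}"
    unfolding usp_def by (rule Max_in[OF usp_set_fin[OF assms(1)] ne])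
  then show ?thesis by auto
qed

lemma usp_le_card:
  assumes "finite (verts H)" "verts H \<noteq> {}" shows "usp H \<le> card (verts H)"
  using usp_ex[OF assms] is_path_len[OF assms(1)] usp_path by metis

lemma is_path_mono:
  assumes "is_path H1 vs es" "verts H1 \<subseteq> verts H" "edges H1 \<subseteq> edges H"
    "\<forall>e\<in>edges H1. ends H1 e = ends H e"
  shows "is_path H vs es"
  using assms unfolding is_path_def by auto

lemma usp_sub:
  assumes "verts H1 \<subseteq> verts H" "edges H1 \<subseteq> edges H" "\<forall>e\<in>edges H1. ends H1 e = ends H e"
    and p1: "is_path H1 vs es" and u: "unique_shortest_path H vs es"
  shows "unique_shortest_path H1 vs es"
proof -
  obtain a b where sp: "shortest_path H a b vs es"
    and un: "\<forall>vs' es'. path_between H a b vs' es' \<and> length vs' = length vs \<longrightarrow> vs' = vs \<and> es' = es"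
    using u unfolding unique_shortest_path_def by blast
  have mono: "path_between H a b vs' es'" if "path_between H1 a b vs' es'" for vs' es'
    using that is_path_mono[OF _ assms(1-3)] unfolding path_between_def by blast
  have pb: "path_between H1 a b vs es" using sp p1 unfolding shortest_path_def path_between_def by blast
  have "shortest_path H1 a b vs es" unfolding shortest_path_def using pb mono sp
    unfolding shortest_path_def by blast
  then show ?thesis unfolding unique_shortest_path_def using mono un by blast
qed

lemma bdd_below_nat: "bdd_below (X :: nat set)"
  by (rule bdd_belowI[of _ 0]) simp

lemma sp_floor_le:
  fixes H :: "(nat,nat) mgraph"
  assumes "wf_graph H" "is_minor G H" shows "sp_floor G \<le> sp H"
proof -
  have "sp H \<in> {sp H' | H' :: (nat,nat) mgraph. wf_graph H' \<and> is_minor G H'}" using assms by blast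
  then show ?thesis unfolding sp_floor_def by (rule cInf_lower[OF _ bdd_below_nat])
qed

lemma induced_verts[simp]: "verts (induced G S) = S"
  and induced_edges[simp]: "edges (induced G S) = {e\<in>edges G. ends G e \<subseteq> S}"
  and induced_ends[simp]: "ends (induced G S) = ends G"
  unfolding induced_def by simp_all

lemma model_induced:
  assumes M: "model G H \<beta> \<eta>" and GW: "\<forall>e\<in>edges G. ends G e \<subseteq> verts G"
    and W: "W \<subseteq> verts G" and S: "\<forall>v\<in>W. \<beta> v \<subseteq> S"
  shows "model (induced G W) (induced H S) \<beta> \<eta>"
proof (rule modelI)
  fix v assume v: "v \<in> verts (induced G W)"
  then have v': "v \<in> verts G" "v \<in> W" using W by auto
  show "\<beta> v \<noteq> {}" by (rule model_ne[OF M v'(1)])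
  show "\<beta> v \<subseteq> verts (induced H S)" using S v' by simp
  show "conn (induced H S) (\<beta> v)"
  proof (rule conn_mono[OF model_conn[OF M v'(1)]])
    fix c d assume "adj H (\<beta> v) c d"
    then obtain g where g: "g \<in> edges H" "ends H g = {c,d}" "c \<in> \<beta> v" "d \<in> \<beta> v"
      unfolding adj_def by blast
    have "\<beta> v \<subseteq> S" using S v' by blast
    then have "g \<in> edges (induced H S)" using g by auto
    then show "adj (induced H S) (\<beta> v) c d" using g unfolding adj_def by auto
  qed
next
  fix v w assume "v \<in> verts (induced G W)" "w \<in> verts (induced G W)" "v \<noteq> w"
  then show "\<beta> v \<inter> \<beta> w = {}" using model_disj[OF M] W by auto
next
  show "inj_on \<eta> (edges (induced G W))" using model_inj[OF M] by (rule inj_on_subset) auto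
  show "\<eta> ` edges (induced G W) \<subseteq> edges (induced H S)"
  proof
    fix f assume "f \<in> \<eta> ` edges (induced G W)"
    then obtain e where e: "e \<in> edges G" "ends G e \<subseteq> W" "f = \<eta> e" by auto
    have "ends H f \<subseteq> (\<Union>x\<in>ends G e. \<beta> x)" using model_ends2[OF M e(1)] e(3) by simp
    also have "\<dots> \<subseteq> S" using e(2) S by blast
    finally show "f \<in> edges (induced H S)" using model_edges[OF M] e by auto
  qed
next
  fix e x assume "e \<in> edges (induced G W)" "x \<in> ends (induced G W) e"
  then show "ends (induced H S) (\<eta> e) \<inter> \<beta> x \<noteq> {}" using model_ends1[OF M] by simp
next
  fix e assume "e \<in> edges (induced G W)"
  then show "ends (induced H S) (\<eta> e) \<subseteq> (\<Union>x\<in>ends (induced G W) e. \<beta> x)"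
    using model_ends2[OF M] by simp
qed

lemma induced_wf:
  assumes "wf_graph H" "S \<subseteq> verts H" "S \<noteq> {}" shows "wf_graph (induced H S)"
  using assms unfolding wf_graph_def by (auto intro: finite_subset)

lemma floor_ge:
  fixes G :: "('v,'e) mgraph" and H :: "(nat,nat) mgraph"
  assumes wfG: "wf_graph G" and V: "V1 \<noteq> {}" "V2 \<noteq> {}" "V1 \<union> V2 = verts G" "V1 \<inter> V2 = {}"
    and wfH: "wf_graph H" and mi: "is_minor G H"
  shows "sp_floor (induced G V1) + sp_floor (induced G V2) \<le> sp H"
proof -
  have gH: "gwf H" using wfH by (rule wf_gwf)
  have GW: "\<forall>e\<in>edges G. ends G e \<subseteq> verts G" using wfG unfolding wf_graph_def by blast
  obtain \<beta> \<eta> where M: "model G H \<beta> \<eta>" using minor_model[OF gH mi GW] by blast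
  have finH: "finite (verts H)" "verts H \<noteq> {}" using wfH unfolding wf_graph_def by auto
  obtain vs es where u: "unique_shortest_path H vs es" and lu: "length vs = usp H"
    using usp_ex[OF finH] by blast
  have p: "is_path H vs es" using u by (rule usp_path)
  have setvs: "set vs \<subseteq> verts H" "vs \<noteq> []" "distinct vs" using p unfolding is_path_def by auto
  define B2 where "B2 = (\<Union>v\<in>V2. \<beta> v)"
  have B2H: "B2 \<subseteq> verts H" unfolding B2_def using model_sub[OF M] V by blast
  define S1 where "S1 = (verts H - B2) \<union> set vs"
  define S2 where "S2 = B2 \<union> set vs"
  have S1H: "S1 \<subseteq> verts H" "S1 \<noteq> {}" using setvs unfolding S1_def by auto
  have S2H: "S2 \<subseteq> verts H" "S2 \<noteq> {}" using setvs B2H unfolding S2_def by auto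
  have wf1: "wf_graph (induced H S1)" using induced_wf[OF wfH S1H] .
  have wf2: "wf_graph (induced H S2)" using induced_wf[OF wfH S2H] .
  have pathS: "is_path (induced H S) vs es" if "set vs \<subseteq> S" for S
    using p that unfolding is_path_def by (auto simp: insert_subset)
  have uS: "unique_shortest_path (induced H S) vs es" if "set vs \<subseteq> S" "S \<subseteq> verts H" for S
    by (rule usp_sub[OF _ _ _ pathS[OF that(1)] u]) (use that(2) in auto)
  have fin1: "finite S1" "finite S2" using S1H S2H finH finite_subset by blast+
  have usp1: "length vs \<le> usp (induced H S1)"
    using usp_ge[of "induced H S1"] uS[of S1] fin1 S1H unfolding S1_def by auto
  have usp2: "length vs \<le> usp (induced H S2)"
    using usp_ge[of "induced H S2"] uS[of S2] fin1 S2H unfolding S2_def by auto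
  have cu: "S1 \<union> S2 = verts H" using B2H setvs unfolding S1_def S2_def by auto
  have ci: "S1 \<inter> S2 = set vs" unfolding S1_def S2_def by auto
  have card: "card S1 + card S2 = card (verts H) + length vs"
    using card_Un_Int[OF fin1] cu ci distinct_card[OF setvs(3)] by simp
  have l1: "length vs \<le> card S1" "length vs \<le> card S2"
    using card_mono[OF fin1(1), of "set vs"] card_mono[OF fin1(2), of "set vs"] distinct_card[OF setvs(3)]
    unfolding S1_def S2_def by auto
  have sp_sum: "sp (induced H S1) + sp (induced H S2) \<le> sp H"
    unfolding sp_def using usp1 usp2 card l1 lu by simp
  have GW2: "\<forall>e\<in>edges G. ends G e \<subseteq> verts G \<and> card (ends G e) = 2"
    using wfG unfolding wf_graph_def by blast
  have GWi: "\<forall>e\<in>edges (induced G W). ends (induced G W) e \<subseteq> verts (induced G W) \<and> card (ends (induced G W) e) = 2" for W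
    using GW2 by simp
  have m1: "model (induced G V1) (induced H S1) \<beta> \<eta>"
  proof (rule model_induced[OF M GW])
    show "V1 \<subseteq> verts G" using V by blast
    show "\<forall>v\<in>V1. \<beta> v \<subseteq> S1"
    proof
      fix v assume v: "v \<in> V1"
      have "\<beta> v \<inter> \<beta> w = {}" if "w \<in> V2" for w
        using model_disj[OF M, of v w] v that V by blast
      then have "\<beta> v \<inter> B2 = {}" unfolding B2_def by blast
      then show "\<beta> v \<subseteq> S1" using model_sub[OF M, of v] v V unfolding S1_def by blast
    qed
  qed
  have m2: "model (induced G V2) (induced H S2) \<beta> \<eta>"
  proof (rule model_induced[OF M GW])
    show "V2 \<subseteq> verts G" using V by blast
    show "\<forall>v\<in>V2. \<beta> v \<subseteq> S2" unfolding S2_def B2_def by blast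
  qed
  have "is_minor (induced G V1) (induced H S1)"
    by (rule model_to_minor[OF wf_gwf[OF wf1] m1 GWi])
  then have f1: "sp_floor (induced G V1) \<le> sp (induced H S1)" by (rule sp_floor_le[OF wf1])
  have "is_minor (induced G V2) (induced H S2)"
    by (rule model_to_minor[OF wf_gwf[OF wf2] m2 GWi])
  then have f2: "sp_floor (induced G V2) \<le> sp (induced H S2)" by (rule sp_floor_le[OF wf2])
  show ?thesis using f1 f2 sp_sum by linarith
qed

lemma host_ex:
  fixes G :: "('v,'e) mgraph"
  assumes wfG: "wf_graph G"
  shows "\<exists>H :: (nat,nat) mgraph. wf_graph H \<and> is_minor G H"
proof -
  have fin: "finite (verts G)" "finite (edges G)" using wfG unfolding wf_graph_def by auto
  obtain f :: "'v \<Rightarrow> nat" where f: "inj_on f (verts G)"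
    using ex_bij_betw_finite_nat[OF fin(1)] bij_betw_imp_inj_on by blast
  obtain g :: "'e \<Rightarrow> nat" where g: "inj_on g (edges G)"
    using ex_bij_betw_finite_nat[OF fin(2)] bij_betw_imp_inj_on by blast
  define gi where "gi = inv_into (edges G) g"
  define H :: "(nat,nat) mgraph" where
    "H = \<lparr>verts = f ` verts G, edges = g ` edges G, ends = (\<lambda>e. f ` ends G (gi e))\<rparr>"
  have gi: "gi (g e) = e" if "e \<in> edges G" for e unfolding gi_def using g that by simp
  have GE: "ends G e \<subseteq> verts G" "card (ends G e) = 2" if "e \<in> edges G" for e
    using wfG that unfolding wf_graph_def by auto
  have wfH: "wf_graph H"
    unfolding wf_graph_def
  proof (intro conjI ballI)
    show "finite (verts H)" "finite (edges H)" "verts H \<noteq> {}" using fin wfG unfolding H_def wf_graph_def by auto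
  next
    fix x assume "x \<in> edges H"
    then obtain e where e: "e \<in> edges G" "x = g e" unfolding H_def by auto
    have ex: "ends H x = f ` ends G e" unfolding H_def using gi[OF e(1)] e(2) by simp
    show "ends H x \<subseteq> verts H" using ex GE[OF e(1)] unfolding H_def by auto
    have "inj_on f (ends G e)" using f GE[OF e(1)] inj_on_subset by blast
    then show "card (ends H x) = 2" using ex GE[OF e(1)] by (simp add: card_image)
  qed
  have "graph_iso H G"
    unfolding graph_iso_def
  proof (intro exI conjI ballI)
    show "bij_betw (inv_into (verts G) f) (verts H) (verts G)"
      unfolding H_def using bij_betw_inv_into[OF inj_on_imp_bij_betw[OF f]] by simp
    show "bij_betw gi (edges H) (edges G)"
      unfolding H_def gi_def using bij_betw_inv_into[OF inj_on_imp_bij_betw[OF g]] by simp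
  next
    fix x assume "x \<in> edges H"
    then obtain e where e: "e \<in> edges G" "x = g e" unfolding H_def by auto
    have ex: "ends H x = f ` ends G e" unfolding H_def using gi[OF e(1)] e(2) by simp
    have "inv_into (verts G) f ` ends H x = ends G e"
      using ex GE[OF e(1)] f by (simp add: inv_into_image_cancel)
    then show "ends G (gi x) = inv_into (verts G) f ` ends H x" using gi[OF e(1)] e(2) by simp
  qed
  then have "is_minor G H" unfolding is_minor_def by (intro exI[of _ H] conjI rtranclp.rtrancl_refl)
  then show ?thesis using wfH by blast
qed

definition comb :: "(nat,nat) mgraph \<Rightarrow> (nat,nat) mgraph \<Rightarrow> nat \<Rightarrow> nat \<Rightarrow> (nat,nat) mgraph" where
  "comb H1 H2 t s = \<lparr>verts = (\<lambda>n. 2*n) ` verts H1 \<union> (\<lambda>n. 2*n+1) ` verts H2,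
     edges = insert 0 ((\<lambda>n. 2*n+1) ` edges H1 \<union> (\<lambda>n. 2*n+2) ` edges H2),
     ends = (\<lambda>x. if x = 0 then {2*t, 2*s+1} else if odd x then (\<lambda>n. 2*n) ` ends H1 ((x - 1) div 2)
                 else (\<lambda>n. 2*n+1) ` ends H2 ((x - 2) div 2))\<rparr>"

lemma comb_verts: "verts (comb H1 H2 t s) = (\<lambda>n. 2*n) ` verts H1 \<union> (\<lambda>n. 2*n+1) ` verts H2"
  and comb_edges: "edges (comb H1 H2 t s) = insert 0 ((\<lambda>n. 2*n+1) ` edges H1 \<union> (\<lambda>n. 2*n+2) ` edges H2)"
  and comb_ends0: "ends (comb H1 H2 t s) 0 = {2*t, 2*s+1}"
  and comb_ends1: "ends (comb H1 H2 t s) (2*m+1) = (\<lambda>n. 2*n) ` ends H1 m"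
  and comb_ends2: "ends (comb H1 H2 t s) (2*m+2) = (\<lambda>n. 2*n+1) ` ends H2 m"
  unfolding comb_def by simp_all

lemma half_img_ev: "(\<lambda>y. y div 2) ` (\<lambda>n. 2*n) ` A = (A :: nat set)"
  by (simp add: image_image)

lemma half_img_od: "(\<lambda>y. y div 2) ` (\<lambda>n. 2*n+1) ` A = (A :: nat set)"
  by (simp add: image_image)

lemma comb_edge:
  assumes x: "x \<in> edges (comb H1 H2 t s)" and pq: "ends (comb H1 H2 t s) x = {p,q}"
  shows "(even p \<and> even q \<longrightarrow> x = 2*((x-1) div 2)+1 \<and> (x-1) div 2 \<in> edges H1 \<and> ends H1 ((x-1) div 2) = {p div 2, q div 2})
    \<and> (odd p \<and> odd q \<longrightarrow> x = 2*((x-2) div 2)+2 \<and> (x-2) div 2 \<in> edges H2 \<and> ends H2 ((x-2) div 2) = {p div 2, q div 2})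
    \<and> (even p \<and> odd q \<longrightarrow> x = 0 \<and> p = 2*t \<and> q = 2*s+1)"
proof -
  consider "x = 0" | m where "m \<in> edges H1" "x = 2*m+1" | m where "m \<in> edges H2" "x = 2*m+2"
    using x unfolding comb_edges by blast
  then show ?thesis
  proof cases
    case 1
    then have e: "{p,q} = {2*t, 2*s+1}" using pq comb_ends0 by metis
    have "\<not> (even p \<and> even q)" "\<not> (odd p \<and> odd q)" using e by (auto simp: doubleton_eq_iff)
    moreover have "even p \<and> odd q \<longrightarrow> p = 2*t \<and> q = 2*s+1" using e by (auto simp: doubleton_eq_iff)
    ultimately show ?thesis using 1 by blast
  next
    case 2
    then have e: "{p,q} = (\<lambda>n. 2*n) ` ends H1 m" using pq comb_ends1 by metis
    have "p \<in> (\<lambda>n. 2*n) ` ends H1 m" "q \<in> (\<lambda>n. 2*n) ` ends H1 m" using e by blast+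
    then have pe: "even p" "even q" by auto
    have m: "(x-1) div 2 = m" using 2 by simp
    have "ends H1 m = (\<lambda>y. y div 2) ` {p,q}" using e half_img_ev by metis
    then show ?thesis using pe m 2 by simp
  next
    case 3
    then have e: "{p,q} = (\<lambda>n. 2*n+1) ` ends H2 m" using pq comb_ends2 by metis
    have "p \<in> (\<lambda>n. 2*n+1) ` ends H2 m" "q \<in> (\<lambda>n. 2*n+1) ` ends H2 m" using e by blast+
    then have pe: "odd p" "odd q" by auto
    have m: "(x-2) div 2 = m" using 3 by simp
    have "ends H2 m = (\<lambda>y. y div 2) ` {p,q}" using e half_img_od by metis
    then show ?thesis using pe m 3 by simp
  qed
qed

lemma comb_vert_even:
  assumes "x \<in> verts (comb H1 H2 t s)" "even x" shows "x div 2 \<in> verts H1"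
  using assms unfolding comb_verts by auto

lemma comb_vert_odd:
  assumes "x \<in> verts (comb H1 H2 t s)" "odd x" shows "x div 2 \<in> verts H2"
  using assms unfolding comb_verts by auto

lemma inj_half_even: "inj_on (\<lambda>x::nat. x div 2) {x. even x}"
  by (rule inj_onI) (metis dvd_mult_div_cancel mem_Collect_eq)

lemma inj_half_odd: "inj_on (\<lambda>x::nat. x div 2) {x. odd x}"
  by (rule inj_onI) (metis mem_Collect_eq odd_two_times_div_two_succ)

lemma comb_decomp:
  fixes H1 H2 :: "(nat,nat) mgraph"
  assumes pb: "path_between (comb H1 H2 t s) (2*a) (2*b+1) P E"
  defines "k \<equiv> LEAST i. odd (P ! i)"
  shows "0 < k \<and> k < length P
    \<and> path_between H1 a t (map (\<lambda>x. x div 2) (take k P)) (map (\<lambda>e. (e-1) div 2) (take (k-1) E))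
    \<and> path_between H2 s b (map (\<lambda>x. x div 2) (drop k P)) (map (\<lambda>e. (e-2) div 2) (drop k E))
    \<and> (\<forall>i<k. even (P!i)) \<and> (\<forall>i. k \<le> i \<and> i < length P \<longrightarrow> odd (P!i))
    \<and> (\<forall>i<k-1. E!i = 2*((E!i-1) div 2)+1) \<and> E!(k-1) = 0
    \<and> (\<forall>i. k \<le> i \<and> i < length E \<longrightarrow> E!i = 2*((E!i-2) div 2)+2)"
proof -
  let ?C = "comb H1 H2 t s"
  define n where "n = length P"
  have Pne: "P \<noteq> []" and dP: "distinct P" and sP: "set P \<subseteq> verts ?C" and lE: "length E + 1 = n"
    and Ee: "\<And>i. i < length E \<Longrightarrow> E!i \<in> edges ?C \<and> ends ?C (E!i) = {P!i, P!Suc i}"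
    and hP: "hd P = 2*a" and lP: "last P = 2*b+1"
    using pb unfolding path_between_def is_path_def n_def by auto
  have n0: "0 < n" using Pne unfolding n_def by simp
  have P0: "P!0 = 2*a" using hP Pne by (simp add: hd_conv_nth)
  have Pn: "P!(n-1) = 2*b+1" using lP Pne unfolding n_def by (simp add: last_conv_nth)
  have Pv: "P!i \<in> verts ?C" if "i < n" for i using sP that unfolding n_def by auto
  have oddn: "odd (P!(n-1))" using Pn by simp
  have kle: "k \<le> n - 1" unfolding k_def by (rule Least_le) (rule oddn)
  have oddk: "odd (P!k)" unfolding k_def by (rule LeastI) (rule oddn)
  have evbefore: "even (P!i)" if "i < k" for i using not_less_Least[OF that[unfolded k_def]] unfolding k_def by simp
  have k0: "0 < k" using oddk P0 by (cases k) auto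
  have kn: "k < n" using kle n0 by simp
  have Ek: "E!(k-1) \<in> edges ?C" "ends ?C (E!(k-1)) = {P!(k-1), P!k}"
    using Ee[of "k-1"] k0 kle lE by auto
  have evk1: "even (P!(k-1))" using evbefore k0 by simp
  from comb_edge[OF Ek] evk1 oddk
  have E0: "E!(k-1) = 0" and Pk1: "P!(k-1) = 2*t" and Pk: "P!k = 2*s+1" by auto
  have oddafter: "odd (P!i)" if "k \<le> i" "i < n" for i
  proof (rule ccontr)
    assume "\<not> odd (P!i)"
    define j where "j = (LEAST j. k \<le> j \<and> j < n \<and> even (P!j))"
    have jP: "k \<le> j \<and> j < n \<and> even (P!j)" unfolding j_def by (rule LeastI[of _ i]) (use that \<open>\<not> odd (P!i)\<close> in simp)
    have jk: "j \<noteq> k" using jP oddk by auto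
    then have jk': "k < j" using jP by simp
    have "\<not> (k \<le> j - 1 \<and> j - 1 < n \<and> even (P!(j-1)))"
      using not_less_Least[of "j-1" "\<lambda>j. k \<le> j \<and> j < n \<and> even (P!j)"] jk' unfolding j_def[symmetric] by simp
    moreover have "j - 1 < n" "k \<le> j - 1" using jk' jP by auto
    ultimately have oj: "odd (P!(j-1))" by simp
    have Ej: "E!(j-1) \<in> edges ?C" "ends ?C (E!(j-1)) = {P!j, P!(j-1)}"
      using Ee[of "j-1"] jk' jP lE by (auto simp: insert_commute)
    from comb_edge[OF Ej] jP oj have "P!j = 2*t" by auto
    then have "P!j = P!(k-1)" using Pk1 by simp
    then have "j = k - 1" using dP jP kn unfolding n_def by (simp add: nth_eq_iff_index_eq)
    then show False using jk' by simp
  qed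
  define V1 where "V1 = map (\<lambda>x. x div 2) (take k P)"
  define E1 where "E1 = map (\<lambda>e. (e-1) div 2) (take (k-1) E)"
  define V2 where "V2 = map (\<lambda>x. x div 2) (drop k P)"
  define E2 where "E2 = map (\<lambda>e. (e-2) div 2) (drop k E)"
  have lV1: "length V1 = k" and lE1: "length E1 = k - 1" and lV2: "length V2 = n - k"
    and lE2: "length E2 = n - 1 - k"
    unfolding V1_def E1_def V2_def E2_def n_def using kn lE unfolding n_def by auto
  have V1i: "V1!i = P!i div 2" if "i < k" for i unfolding V1_def using that kn unfolding n_def by simp
  have V2i: "V2!i = P!(k+i) div 2" if "i < n - k" for i unfolding V2_def using that kn unfolding n_def by simp
  have E1i: "E1!i = (E!i - 1) div 2" if "i < k - 1" for i unfolding E1_def using that kn lE by simp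
  have E2i: "E2!i = (E!(k+i) - 2) div 2" if "i < n - 1 - k" for i
  proof -
    have "k \<le> length E" using kle lE by simp
    then have "drop k E ! i = E!(k+i)" by (rule nth_drop)
    moreover have "i < length (drop k E)" using that lE by simp
    ultimately show ?thesis unfolding E2_def by simp
  qed
  have p1: "is_path H1 V1 E1"
    unfolding is_path_def
  proof (intro conjI allI impI)
    show "V1 \<noteq> []" using lV1 k0 by auto
    have "set (take k P) \<subseteq> {x. even x}"
      by (auto simp: in_set_conv_nth evbefore)
    then show "distinct V1" unfolding V1_def using dP
      by (simp add: distinct_map inj_on_subset[OF inj_half_even])
    show "set V1 \<subseteq> verts H1"
    proof
      fix y assume "y \<in> set V1"
      then obtain i where i: "i < k" "y = V1!i" using lV1 by (auto simp: in_set_conv_nth)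
      then show "y \<in> verts H1" using V1i comb_vert_even[OF Pv evbefore] kn by simp
    qed
    show "length E1 + 1 = length V1" using lV1 lE1 k0 by simp
  next
    fix i assume i: "i < length E1"
    then have i': "i < k - 1" using lE1 by simp
    have e: "E!i \<in> edges ?C" "ends ?C (E!i) = {P!i, P!Suc i}" using Ee[of i] i' kn lE by auto
    have ev: "even (P!i)" "even (P!Suc i)" using evbefore i' by auto
    from comb_edge[OF e] ev
    have "(E!i-1) div 2 \<in> edges H1 \<and> ends H1 ((E!i-1) div 2) = {P!i div 2, P!Suc i div 2}" by blast
    then show "E1!i \<in> edges H1" "ends H1 (E1!i) = {V1!i, V1!Suc i}"
      using E1i[OF i'] V1i i' by simp_all
  qed
  have V1ne: "V1 \<noteq> []" using lV1 k0 by auto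
  have hV1: "hd V1 = a" using V1i[of 0] k0 P0 V1ne by (simp add: hd_conv_nth)
  have "V1!(k-1) = t" using V1i[of "k-1"] k0 Pk1 by simp
  then have lastV1: "last V1 = t" using V1ne lV1 by (simp add: last_conv_nth)
  have p2: "is_path H2 V2 E2"
    unfolding is_path_def
  proof (intro conjI allI impI)
    show "V2 \<noteq> []" using lV2 kn by auto
    have "set (drop k P) \<subseteq> {x. odd x}"
      by (auto simp: in_set_conv_nth oddafter n_def)
    then show "distinct V2" unfolding V2_def using dP
      by (simp add: distinct_map inj_on_subset[OF inj_half_odd])
    show "set V2 \<subseteq> verts H2"
    proof
      fix y assume "y \<in> set V2"
      then obtain i where i: "i < n - k" "y = V2!i" using lV2 by (auto simp: in_set_conv_nth)
      have "odd (P!(k+i))" "k + i < n" using oddafter i by auto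
      then show "y \<in> verts H2" using V2i[OF i(1)] i(2) comb_vert_odd[OF Pv] by simp
    qed
    show "length E2 + 1 = length V2" using lV2 lE2 kn by simp
  next
    fix i assume i: "i < length E2"
    then have i': "i < n - 1 - k" using lE2 by simp
    have e: "E!(k+i) \<in> edges ?C" "ends ?C (E!(k+i)) = {P!(k+i), P!Suc (k+i)}" using Ee[of "k+i"] i' lE by auto
    have od: "odd (P!(k+i))" "odd (P!Suc (k+i))" using oddafter i' by auto
    from comb_edge[OF e] od
    have "(E!(k+i)-2) div 2 \<in> edges H2 \<and> ends H2 ((E!(k+i)-2) div 2) = {P!(k+i) div 2, P!Suc (k+i) div 2}" by blast
    then show "E2!i \<in> edges H2" "ends H2 (E2!i) = {V2!i, V2!Suc i}"
      using E2i[OF i'] V2i i' by simp_all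
  qed
  have V2ne: "V2 \<noteq> []" using lV2 kn by auto
  have hV2: "hd V2 = s" using V2i[of 0] kn Pk V2ne by (simp add: hd_conv_nth)
  have "V2!(n-1-k) = b" using V2i[of "n-1-k"] kn Pn by simp
  then have lastV2: "last V2 = b" using V2ne lV2 by (simp add: last_conv_nth)
  have Eodd: "\<forall>i<k-1. E!i = 2*((E!i-1) div 2)+1"
  proof (intro allI impI)
    fix i assume i': "i < k - 1"
    have e: "E!i \<in> edges ?C" "ends ?C (E!i) = {P!i, P!Suc i}" using Ee[of i] i' kn lE by auto
    have ev: "even (P!i)" "even (P!Suc i)" using evbefore i' by auto
    from comb_edge[OF e] ev show "E!i = 2*((E!i-1) div 2)+1" by blast
  qed
  have Eeven: "\<forall>i. k \<le> i \<and> i < length E \<longrightarrow> E!i = 2*((E!i-2) div 2)+2"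
  proof (intro allI impI)
    fix i assume i': "k \<le> i \<and> i < length E"
    have e: "E!i \<in> edges ?C" "ends ?C (E!i) = {P!i, P!Suc i}" using Ee[of i] i' by auto
    have od: "odd (P!i)" "odd (P!Suc i)" using oddafter i' lE by auto
    from comb_edge[OF e] od show "E!i = 2*((E!i-2) div 2)+2" by blast
  qed
  show ?thesis
    unfolding path_between_def
    using k0 kn p1 p2 hV1 lastV1 hV2 lastV2 evbefore oddafter Eodd E0 Eeven
    unfolding V1_def E1_def V2_def E2_def n_def by blast
qed

lemma ev_ne_od[simp]: "(2::nat)*x \<noteq> 2*y+1" "(2::nat)*y+1 \<noteq> 2*x" "(2::nat)*x \<noteq> Suc (2*y)" "Suc (2*y) \<noteq> 2*x" by presburger+

lemma comb_ends1s[simp]: "ends (comb H1 H2 t s) (Suc (2*m)) = (\<lambda>n. 2*n) ` ends H1 m"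
  using comb_ends1[of H1 H2 t s m] by simp

lemma comb_ends2s[simp]: "ends (comb H1 H2 t s) (Suc (Suc (2*m))) = (\<lambda>n. 2*n+1) ` ends H2 m"
  using comb_ends2[of H1 H2 t s m] by simp

lemma comb_usp:
  fixes H1 H2 :: "(nat,nat) mgraph"
  assumes u1: "unique_shortest_path H1 vs1 es1" and u2: "unique_shortest_path H2 vs2 es2"
  shows "unique_shortest_path (comb H1 H2 (last vs1) (hd vs2))
           (map (\<lambda>n. 2*n) vs1 @ map (\<lambda>n. 2*n+1) vs2) (map (\<lambda>n. 2*n+1) es1 @ 0 # map (\<lambda>n. 2*n+2) es2)"
proof -
  obtain a1 b1 where sp1: "shortest_path H1 a1 b1 vs1 es1"
    and un1: "\<forall>vs' es'. path_between H1 a1 b1 vs' es' \<and> length vs' = length vs1 \<longrightarrow> vs' = vs1 \<and> es' = es1"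
    using u1 unfolding unique_shortest_path_def by blast
  obtain a2 b2 where sp2: "shortest_path H2 a2 b2 vs2 es2"
    and un2: "\<forall>vs' es'. path_between H2 a2 b2 vs' es' \<and> length vs' = length vs2 \<longrightarrow> vs' = vs2 \<and> es' = es2"
    using u2 unfolding unique_shortest_path_def by blast
  have pb1: "path_between H1 a1 b1 vs1 es1" and pb2: "path_between H2 a2 b2 vs2 es2"
    using sp1 sp2 unfolding shortest_path_def by blast+
  have min1: "length vs1 \<le> length vs'" if "path_between H1 a1 b1 vs' es'" for vs' es'
    using sp1 that unfolding shortest_path_def by blast
  have min2: "length vs2 \<le> length vs'" if "path_between H2 a2 b2 vs' es'" for vs' es'
    using sp2 that unfolding shortest_path_def by blast
  have p1: "is_path H1 vs1 es1" and h1: "hd vs1 = a1" and l1: "last vs1 = b1"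
    using pb1 unfolding path_between_def by blast+
  have p2: "is_path H2 vs2 es2" and h2: "hd vs2 = a2" and l2: "last vs2 = b2"
    using pb2 unfolding path_between_def by blast+
  define L1 where "L1 = length vs1"
  define L2 where "L2 = length vs2"
  have ne1: "vs1 \<noteq> []" and d1: "distinct vs1" and s1: "set vs1 \<subseteq> verts H1" and le1: "length es1 + 1 = L1"
    and e1: "\<And>i. i < length es1 \<Longrightarrow> es1!i \<in> edges H1 \<and> ends H1 (es1!i) = {vs1!i, vs1!Suc i}"
    using p1 unfolding is_path_def L1_def by auto
  have ne2: "vs2 \<noteq> []" and d2: "distinct vs2" and s2: "set vs2 \<subseteq> verts H2" and le2: "length es2 + 1 = L2"
    and e2: "\<And>i. i < length es2 \<Longrightarrow> es2!i \<in> edges H2 \<and> ends H2 (es2!i) = {vs2!i, vs2!Suc i}"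
    using p2 unfolding is_path_def L2_def by auto
  have L1p: "0 < L1" and L2p: "0 < L2" using ne1 ne2 unfolding L1_def L2_def by auto
  define C where "C = comb H1 H2 b1 a2"
  define VS where "VS = map (\<lambda>n. 2*n) vs1 @ map (\<lambda>n. 2*n+1) vs2"
  define ES where "ES = map (\<lambda>n. 2*n+1) es1 @ 0 # map (\<lambda>n. 2*n+2) es2"
  have lVS: "length VS = L1 + L2" unfolding VS_def L1_def L2_def by simp
  have lES: "length ES = L1 + L2 - 1" unfolding ES_def using le1 le2 by simp
  have VSa: "VS!i = 2*(vs1!i)" if "i < L1" for i unfolding VS_def using that L1_def by (simp add: nth_append)
  have VSb: "VS!(L1+j) = 2*(vs2!j)+1" if "j < L2" for j unfolding VS_def using that L1_def L2_def by (simp add: nth_append)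
  have ESa: "ES!i = 2*(es1!i)+1" if "i < L1 - 1" for i unfolding ES_def using that le1 by (simp add: nth_append)
  have ESm: "ES!(L1-1) = 0" unfolding ES_def using le1 by (simp add: nth_append)
  have ESb: "ES!(L1+j) = 2*(es2!j)+2" if "j < L2 - 1" for j
  proof -
    have "ES!(L1+j) = (0 # map (\<lambda>n. 2*n+2) es2) ! (Suc j)" unfolding ES_def using le1 L1p
      by (simp add: nth_append)
    then show ?thesis using that le2 by simp
  qed
  have pC: "is_path C VS ES"
    unfolding is_path_def
  proof (intro conjI allI impI)
    show "VS \<noteq> []" unfolding VS_def using ne1 by simp
    have "distinct (map (\<lambda>n. 2*n) vs1)" using d1 by (simp add: distinct_map inj_on_def)
    moreover have "distinct (map (\<lambda>n::nat. 2*n+1) vs2)" using d2 by (simp add: distinct_map inj_on_def)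
    moreover have "set (map (\<lambda>n. 2*n) vs1) \<inter> set (map (\<lambda>n::nat. 2*n+1) vs2) = {}" by auto
    ultimately show "distinct VS" unfolding VS_def by simp
    show "set VS \<subseteq> verts C" unfolding VS_def C_def comb_verts using s1 s2 by auto
    show "length ES + 1 = length VS" using lES lVS L1p by simp
  next
    fix i assume i: "i < length ES"
    have c3: "i < L1 - 1 \<or> i = L1 - 1 \<or> (L1 \<le> i \<and> i - L1 < L2 - 1)" using i lES L1p by arith
    obtain j where "j = i - L1" by blast
    then consider (a) "i < L1 - 1" | (m) "i = L1 - 1" | (b) "i = L1 + j" "j < L2 - 1"
      using c3 by force
    then have "ES!i \<in> edges C \<and> ends C (ES!i) = {VS!i, VS!Suc i}"
    proof cases
      case a
      have ei: "es1!i \<in> edges H1" "ends H1 (es1!i) = {vs1!i, vs1!Suc i}" using e1[of i] a le1 by auto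
      have "ES!i \<in> edges C" using ESa[OF a] ei(1) unfolding C_def comb_edges by auto
      moreover have "ends C (ES!i) = {VS!i, VS!Suc i}"
        using ESa[OF a] ei(2) VSa[of i] VSa[of "Suc i"] a unfolding C_def comb_ends1 by simp
      ultimately show ?thesis by blast
    next
      case m
      have "VS!i = 2*b1" using VSa[of i] m L1p l1 ne1 by (simp add: last_conv_nth L1_def)
      moreover have "VS!Suc i = 2*a2+1" using VSb[of 0] m L1p L2p h2 ne2 by (simp add: hd_conv_nth)
      ultimately show ?thesis using ESm m unfolding C_def comb_edges by (simp add: comb_ends0)
    next
      case b
      have ej: "es2!j \<in> edges H2" "ends H2 (es2!j) = {vs2!j, vs2!Suc j}" using e2[of j] b le2 by auto
      have "ES!i \<in> edges C" using ESb[OF b(2)] b(1) ej(1) unfolding C_def comb_edges by auto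
      moreover have "ends C (ES!i) = {VS!i, VS!Suc i}"
        using ESb[OF b(2)] b ej(2) VSb[of j] VSb[of "Suc j"] unfolding C_def comb_ends2 by simp
      ultimately show ?thesis by blast
    qed
    then show "ES!i \<in> edges C" "ends C (ES!i) = {VS!i, VS!Suc i}" by blast+
  qed
  have hVS: "hd VS = 2*a1" unfolding VS_def using ne1 h1 by (simp add: hd_map)
  have lastVS: "last VS = 2*b2+1" unfolding VS_def using ne2 l2 by (simp add: last_map)
  have pbC: "path_between C (2*a1) (2*b2+1) VS ES" unfolding path_between_def using pC hVS lastVS by blast
  have key: "length VS \<le> length P \<and> (length P = length VS \<longrightarrow> P = VS \<and> E = ES)"
    if pb: "path_between C (2*a1) (2*b2+1) P E" for P E
  proof -
    define k where "k = (LEAST i. odd (P ! i))"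
    have D: "0 < k \<and> k < length P
    \<and> path_between H1 a1 b1 (map (\<lambda>x. x div 2) (take k P)) (map (\<lambda>e. (e-1) div 2) (take (k-1) E))
    \<and> path_between H2 a2 b2 (map (\<lambda>x. x div 2) (drop k P)) (map (\<lambda>e. (e-2) div 2) (drop k E))
    \<and> (\<forall>i<k. even (P!i)) \<and> (\<forall>i. k \<le> i \<and> i < length P \<longrightarrow> odd (P!i))
    \<and> (\<forall>i<k-1. E!i = 2*((E!i-1) div 2)+1) \<and> E!(k-1) = 0
    \<and> (\<forall>i. k \<le> i \<and> i < length E \<longrightarrow> E!i = 2*((E!i-2) div 2)+2)"
      unfolding k_def by (rule comb_decomp) (use pb in \<open>simp add: C_def\<close>)
    then have k0: "0 < k" and kn: "k < length P"
      and q1: "path_between H1 a1 b1 (map (\<lambda>x. x div 2) (take k P)) (map (\<lambda>e. (e-1) div 2) (take (k-1) E))"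
      and q2: "path_between H2 a2 b2 (map (\<lambda>x. x div 2) (drop k P)) (map (\<lambda>e. (e-2) div 2) (drop k E))"
      and evb: "\<forall>i<k. even (P!i)" and oda: "\<forall>i. k \<le> i \<and> i < length P \<longrightarrow> odd (P!i)"
      and Eo: "\<forall>i<k-1. E!i = 2*((E!i-1) div 2)+1" and E0: "E!(k-1) = 0"
      and Ev: "\<forall>i. k \<le> i \<and> i < length E \<longrightarrow> E!i = 2*((E!i-2) div 2)+2"
      by blast+
    have lE: "length E + 1 = length P" using pb unfolding path_between_def is_path_def by blast
    have m1: "L1 \<le> k" using min1[OF q1] kn unfolding L1_def by simp
    have m2: "L2 \<le> length P - k" using min2[OF q2] unfolding L2_def by simp
    have ge: "length VS \<le> length P" using m1 m2 lVS kn by simp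
    have eq: "P = VS \<and> E = ES" if lP: "length P = length VS"
    proof -
      have kL1: "k = L1" using m1 m2 lP lVS kn by simp
      have "map (\<lambda>x. x div 2) (take k P) = vs1 \<and> map (\<lambda>e. (e-1) div 2) (take (k-1) E) = es1"
      proof -
        have "length (map (\<lambda>x. x div 2) (take k P)) = length vs1" using kL1 kn unfolding L1_def by simp
        then show ?thesis using un1 q1 by blast
      qed
      then have T1: "map (\<lambda>x. x div 2) (take k P) = vs1" and T1e: "map (\<lambda>e. (e-1) div 2) (take (k-1) E) = es1"
        by blast+
      have "map (\<lambda>x. x div 2) (drop k P) = vs2 \<and> map (\<lambda>e. (e-2) div 2) (drop k E) = es2"
      proof -
        have "length (map (\<lambda>x. x div 2) (drop k P)) = length vs2" using kL1 lP lVS unfolding L2_def by simp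
        then show ?thesis using un2 q2 by blast
      qed
      then have T2: "map (\<lambda>x. x div 2) (drop k P) = vs2" and T2e: "map (\<lambda>e. (e-2) div 2) (drop k E) = es2"
        by blast+
      have PV: "P = VS"
      proof (rule nth_equalityI)
        show "length P = length VS" by (rule lP)
      next
        fix i assume i: "i < length P"
        show "P!i = VS!i"
        proof (cases "i < k")
          case True
          have "vs1!i = P!i div 2" using T1[symmetric] True kn by simp
          moreover have "even (P!i)" using evb True by blast
          ultimately show ?thesis using VSa[of i] True kL1 by simp
        next
          case False
          define j where "j = i - k"
          have ij: "i = L1 + j" using False kL1 unfolding j_def by simp
          have jl: "j < L2" using i lP lVS ij by simp
          have "vs2!j = P!i div 2" using T2[symmetric] jl i False unfolding j_def L2_def by simp
          moreover have "odd (P!i)" using oda False i by simp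
          ultimately show ?thesis using VSb[OF jl] ij by simp
        qed
      qed
      have EE: "E = ES"
      proof (rule nth_equalityI)
        show "length E = length ES" using lE lP lVS lES by simp
      next
        fix i assume i: "i < length E"
        consider (a) "i < k - 1" | (m) "i = k - 1" | (b) "k \<le> i" by linarith
        then show "E!i = ES!i"
        proof cases
          case a
          have "es1!i = (E!i - 1) div 2" using T1e[symmetric] a i by simp
          then show ?thesis using Eo a ESa[of i] kL1 by simp
        next
          case m
          then show ?thesis using E0 ESm kL1 by simp
        next
          case b
          define j where "j = i - k"
          have ij: "i = L1 + j" using b kL1 unfolding j_def by simp
          have jl: "j < L2 - 1" using i lE lP lVS ij by simp
          have "drop k E ! j = E ! (k + j)" using b i by (intro nth_drop) simp
          then have dj: "drop k E ! j = E ! i" using b unfolding j_def by simp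
          have "es2!j = (E!i - 2) div 2" using T2e[symmetric] jl i b dj unfolding j_def by simp
          then show ?thesis using Ev b i ESb[OF jl] ij by simp
        qed
      qed
      show ?thesis using PV EE by blast
    qed
    show ?thesis using ge eq by blast
  qed
  have "shortest_path C (2*a1) (2*b2+1) VS ES" unfolding shortest_path_def using pbC key by blast
  then have "unique_shortest_path C VS ES" unfolding unique_shortest_path_def using key by blast
  then show ?thesis unfolding C_def VS_def ES_def using l1 h2 by simp
qed

lemma comb_wf:
  fixes H1 H2 :: "(nat,nat) mgraph"
  assumes w1: "wf_graph H1" and w2: "wf_graph H2" and t: "t \<in> verts H1" and s: "s \<in> verts H2"
  shows "wf_graph (comb H1 H2 t s)"
  unfolding wf_graph_def
proof (intro conjI ballI)
  show "finite (verts (comb H1 H2 t s))" "finite (edges (comb H1 H2 t s))"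
    using w1 w2 unfolding wf_graph_def comb_verts comb_edges by auto
  show "verts (comb H1 H2 t s) \<noteq> {}" using t unfolding comb_verts by auto
next
  fix x assume x: "x \<in> edges (comb H1 H2 t s)"
  consider "x = 0" | m where "m \<in> edges H1" "x = 2*m+1" | m where "m \<in> edges H2" "x = 2*m+2"
    using x unfolding comb_edges by blast
  then have "ends (comb H1 H2 t s) x \<subseteq> verts (comb H1 H2 t s) \<and> card (ends (comb H1 H2 t s) x) = 2"
  proof cases
    case 1
    then show ?thesis using t s unfolding comb_verts by (simp add: comb_ends0)
  next
    case 2
    have "ends H1 m \<subseteq> verts H1" "card (ends H1 m) = 2" using w1 2(1) unfolding wf_graph_def by auto
    moreover have "inj_on (\<lambda>n::nat. 2*n) (ends H1 m)" by (simp add: inj_on_def)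
    ultimately show ?thesis using 2(2) unfolding comb_verts by (auto simp: comb_ends1 card_image)
  next
    case 3
    have "ends H2 m \<subseteq> verts H2" "card (ends H2 m) = 2" using w2 3(1) unfolding wf_graph_def by auto
    moreover have "inj_on (\<lambda>n::nat. 2*n+1) (ends H2 m)" by (simp add: inj_on_def)
    ultimately show ?thesis using 3(2) unfolding comb_verts by (auto simp: comb_ends2 card_image)
  qed
  then show "ends (comb H1 H2 t s) x \<subseteq> verts (comb H1 H2 t s)" "card (ends (comb H1 H2 t s) x) = 2"
    by blast+
qed

lemma comb_model:
  fixes G :: "('v,'e) mgraph" and H1 H2 :: "(nat,nat) mgraph"
  assumes wfG: "wf_graph G"
    and V: "V1 \<union> V2 = verts G" "V1 \<inter> V2 = {}"
    and cross: "\<forall>e\<in>edges G. ends G e \<subseteq> V1 \<or> ends G e \<subseteq> V2"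
    and M1: "model (induced G V1) H1 \<beta>1 \<eta>1" and M2: "model (induced G V2) H2 \<beta>2 \<eta>2"
  shows "model G (comb H1 H2 t s) (\<lambda>v. if v \<in> V1 then (\<lambda>n. 2*n) ` \<beta>1 v else (\<lambda>n. 2*n+1) ` \<beta>2 v)
           (\<lambda>e. if ends G e \<subseteq> V1 then 2 * \<eta>1 e + 1 else 2 * \<eta>2 e + 2)"
    (is "model G ?C ?\<beta> ?\<eta>")
proof -
  have GE: "ends G e \<noteq> {}" if "e \<in> edges G" for e
    using wfG that unfolding wf_graph_def by (metis card.empty zero_neq_numeral)
  have e1: "e \<in> edges (induced G V1)" if "e \<in> edges G" "ends G e \<subseteq> V1" for e using that by simp
  have e2: "e \<in> edges (induced G V2)" if "e \<in> edges G" "\<not> ends G e \<subseteq> V1" for e using that cross by auto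
  have injev: "inj (\<lambda>n::nat. 2*n)" by (simp add: inj_on_def)
  have injod: "inj (\<lambda>n::nat. 2*n+1)" by (simp add: inj_on_def)
  show ?thesis
  proof (rule modelI)
    fix v assume v: "v \<in> verts G"
    show "?\<beta> v \<noteq> {}"
      using model_ne[OF M1, of v] model_ne[OF M2, of v] v V by auto
    show "?\<beta> v \<subseteq> verts ?C"
    proof (cases "v \<in> V1")
      case True
      then show ?thesis using model_sub[OF M1, of v] unfolding comb_verts by auto
    next
      case False
      then have "v \<in> V2" using v V by blast
      then show ?thesis using model_sub[OF M2, of v] False unfolding comb_verts by auto
    qed
    show "conn ?C (?\<beta> v)"
    proof (cases "v \<in> V1")
      case True
      have "conn ?C ((\<lambda>n. 2*n) ` \<beta>1 v)"
      proof (rule conn_map[OF model_conn[OF M1]])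
        show "v \<in> verts (induced G V1)" using True by simp
      next
        fix c d assume "adj H1 (\<beta>1 v) c d"
        then obtain g where g: "g \<in> edges H1" "ends H1 g = {c,d}" "c \<in> \<beta>1 v" "d \<in> \<beta>1 v"
          unfolding adj_def by blast
        have "2*g+1 \<in> edges ?C" using g(1) unfolding comb_edges by auto
        moreover have "ends ?C (2*g+1) = {2*c, 2*d}" using g(2) by (simp add: comb_ends1)
        ultimately show "2*c = 2*d \<or> adj ?C ((\<lambda>n. 2*n) ` \<beta>1 v) (2*c) (2*d)"
          using g(3,4) unfolding adj_def by blast
      qed
      then show ?thesis using True by simp
    next
      case False
      then have v2: "v \<in> V2" using v V by blast
      have "conn ?C ((\<lambda>n. 2*n+1) ` \<beta>2 v)"
      proof (rule conn_map[OF model_conn[OF M2]])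
        show "v \<in> verts (induced G V2)" using v2 by simp
      next
        fix c d assume "adj H2 (\<beta>2 v) c d"
        then obtain g where g: "g \<in> edges H2" "ends H2 g = {c,d}" "c \<in> \<beta>2 v" "d \<in> \<beta>2 v"
          unfolding adj_def by blast
        have "2*g+2 \<in> edges ?C" using g(1) unfolding comb_edges by auto
        moreover have "ends ?C (2*g+2) = {2*c+1, 2*d+1}" using g(2) by (simp add: comb_ends2)
        ultimately show "2*c+1 = 2*d+1 \<or> adj ?C ((\<lambda>n. 2*n+1) ` \<beta>2 v) (2*c+1) (2*d+1)"
          using g(3,4) unfolding adj_def by blast
      qed
      then show ?thesis using False by simp
    qed
  next
    fix v w assume vw: "v \<in> verts G" "w \<in> verts G" "v \<noteq> w"
    show "?\<beta> v \<inter> ?\<beta> w = {}"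
    proof (cases "v \<in> V1"; cases "w \<in> V1")
      assume a: "v \<in> V1" "w \<in> V1"
      have "\<beta>1 v \<inter> \<beta>1 w = {}" using model_disj[OF M1, of v w] a vw by simp
      then show ?thesis using a injev by (simp add: image_Int[symmetric])
    next
      assume a: "\<not> v \<in> V1" "\<not> w \<in> V1"
      have "\<beta>2 v \<inter> \<beta>2 w = {}" using model_disj[OF M2, of v w] a vw V by auto
      then show ?thesis using a injod by (simp add: image_Int[symmetric])
    qed auto
  next
    show "inj_on ?\<eta> (edges G)"
    proof (rule inj_onI)
      fix e e' assume ee: "e \<in> edges G" "e' \<in> edges G" "?\<eta> e = ?\<eta> e'"
      show "e = e'"
      proof (cases "ends G e \<subseteq> V1"; cases "ends G e' \<subseteq> V1")
        assume a: "ends G e \<subseteq> V1" "ends G e' \<subseteq> V1"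
        then have "\<eta>1 e = \<eta>1 e'" using ee by simp
        then show ?thesis using model_inj[OF M1] e1 ee a unfolding inj_on_def by blast
      next
        assume a: "\<not> ends G e \<subseteq> V1" "\<not> ends G e' \<subseteq> V1"
        then have "\<eta>2 e = \<eta>2 e'" using ee by simp
        then show ?thesis using model_inj[OF M2] e2 ee a unfolding inj_on_def by blast
      next
        assume a: "ends G e \<subseteq> V1" "\<not> ends G e' \<subseteq> V1"
        then show ?thesis using ee(3) by presburger
      next
        assume a: "\<not> ends G e \<subseteq> V1" "ends G e' \<subseteq> V1"
        then show ?thesis using ee(3) by presburger
      qed
    qed
  next
    show "?\<eta> ` edges G \<subseteq> edges ?C"
    proof
      fix x assume "x \<in> ?\<eta> ` edges G"
      then obtain e where e: "e \<in> edges G" "x = ?\<eta> e" by blast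
      show "x \<in> edges ?C"
      proof (cases "ends G e \<subseteq> V1")
        case True
        then have "\<eta>1 e \<in> edges H1" using model_edges[OF M1] e1[OF e(1)] by blast
        then show ?thesis using e True unfolding comb_edges by auto
      next
        case False
        then have "\<eta>2 e \<in> edges H2" using model_edges[OF M2] e2[OF e(1)] by blast
        then show ?thesis using e False unfolding comb_edges by auto
      qed
    qed
  next
    fix e x assume e: "e \<in> edges G" and x: "x \<in> ends G e"
    show "ends ?C (?\<eta> e) \<inter> ?\<beta> x \<noteq> {}"
    proof (cases "ends G e \<subseteq> V1")
      case True
      have "ends H1 (\<eta>1 e) \<inter> \<beta>1 x \<noteq> {}" using model_ends1[OF M1 e1[OF e True]] x by simp
      moreover have "x \<in> V1" using x True by blast
      ultimately show ?thesis using True injev by (simp add: comb_ends1 image_Int[symmetric])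
    next
      case False
      have "ends H2 (\<eta>2 e) \<inter> \<beta>2 x \<noteq> {}" using model_ends1[OF M2 e2[OF e False]] x by simp
      moreover have "x \<notin> V1" using x False cross e V by blast
      ultimately show ?thesis using False injod by (simp add: comb_ends2 image_Int[symmetric])
    qed
  next
    fix e assume e: "e \<in> edges G"
    show "ends ?C (?\<eta> e) \<subseteq> (\<Union>x\<in>ends G e. ?\<beta> x)"
    proof (cases "ends G e \<subseteq> V1")
      case True
      have "ends H1 (\<eta>1 e) \<subseteq> (\<Union>x\<in>ends G e. \<beta>1 x)" using model_ends2[OF M1 e1[OF e True]] by simp
      then have "(\<lambda>n. 2*n) ` ends H1 (\<eta>1 e) \<subseteq> (\<Union>x\<in>ends G e. (\<lambda>n. 2*n) ` \<beta>1 x)" by blast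
      moreover have "(\<Union>x\<in>ends G e. (\<lambda>n. 2*n) ` \<beta>1 x) = (\<Union>x\<in>ends G e. ?\<beta> x)"
        using True by (intro SUP_cong) auto
      ultimately show ?thesis using True by (simp add: comb_ends1)
    next
      case False
      have "ends H2 (\<eta>2 e) \<subseteq> (\<Union>x\<in>ends G e. \<beta>2 x)" using model_ends2[OF M2 e2[OF e False]] by simp
      then have "(\<lambda>n. 2*n+1) ` ends H2 (\<eta>2 e) \<subseteq> (\<Union>x\<in>ends G e. (\<lambda>n. 2*n+1) ` \<beta>2 x)" by blast
      moreover have "ends G e \<subseteq> V2" using False cross e by blast
      then have "(\<Union>x\<in>ends G e. (\<lambda>n. 2*n+1) ` \<beta>2 x) = (\<Union>x\<in>ends G e. ?\<beta> x)"
        using V by (intro SUP_cong) auto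
      ultimately show ?thesis using False by (simp add: comb_ends2)
    qed
  qed
qed

lemma floor_le:
  fixes G :: "('v,'e) mgraph" and H1 H2 :: "(nat,nat) mgraph"
  assumes wfG: "wf_graph G"
    and V: "V1 \<union> V2 = verts G" "V1 \<inter> V2 = {}"
    and cross: "\<forall>e\<in>edges G. ends G e \<subseteq> V1 \<or> ends G e \<subseteq> V2"
    and wf1: "wf_graph H1" and wf2: "wf_graph H2"
    and mi1: "is_minor (induced G V1) H1" and mi2: "is_minor (induced G V2) H2"
  shows "sp_floor G \<le> sp H1 + sp H2"
proof -
  have GWi: "\<forall>e\<in>edges (induced G W). ends (induced G W) e \<subseteq> verts (induced G W)" for W by simp
  obtain \<beta>1 \<eta>1 where M1: "model (induced G V1) H1 \<beta>1 \<eta>1" using minor_model[OF wf_gwf[OF wf1] mi1 GWi] by blast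
  obtain \<beta>2 \<eta>2 where M2: "model (induced G V2) H2 \<beta>2 \<eta>2" using minor_model[OF wf_gwf[OF wf2] mi2 GWi] by blast
  have f1: "finite (verts H1)" "verts H1 \<noteq> {}" using wf1 unfolding wf_graph_def by auto
  have f2: "finite (verts H2)" "verts H2 \<noteq> {}" using wf2 unfolding wf_graph_def by auto
  obtain vs1 es1 where u1: "unique_shortest_path H1 vs1 es1" and l1: "length vs1 = usp H1" using usp_ex[OF f1] by blast
  obtain vs2 es2 where u2: "unique_shortest_path H2 vs2 es2" and l2: "length vs2 = usp H2" using usp_ex[OF f2] by blast
  have p1: "vs1 \<noteq> []" "set vs1 \<subseteq> verts H1" using usp_path[OF u1] unfolding is_path_def by auto
  have p2: "vs2 \<noteq> []" "set vs2 \<subseteq> verts H2" using usp_path[OF u2] unfolding is_path_def by auto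
  have t: "last vs1 \<in> verts H1" using p1 by auto
  have s: "hd vs2 \<in> verts H2" using p2 by auto
  define C where "C = comb H1 H2 (last vs1) (hd vs2)"
  have wfC: "wf_graph C" unfolding C_def by (rule comb_wf[OF wf1 wf2 t s])
  have MC: "model G C (\<lambda>v. if v \<in> V1 then (\<lambda>n. 2*n) ` \<beta>1 v else (\<lambda>n. 2*n+1) ` \<beta>2 v)
           (\<lambda>e. if ends G e \<subseteq> V1 then 2 * \<eta>1 e + 1 else 2 * \<eta>2 e + 2)"
    unfolding C_def by (rule comb_model[OF wfG V cross M1 M2])
  have GW2: "\<forall>e\<in>edges G. ends G e \<subseteq> verts G \<and> card (ends G e) = 2"
    using wfG unfolding wf_graph_def by blast
  have miC: "is_minor G C" by (rule model_to_minor[OF wf_gwf[OF wfC] MC GW2])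
  have uC: "unique_shortest_path C (map (\<lambda>n. 2*n) vs1 @ map (\<lambda>n. 2*n+1) vs2)
              (map (\<lambda>n. 2*n+1) es1 @ 0 # map (\<lambda>n. 2*n+2) es2)"
    unfolding C_def by (rule comb_usp[OF u1 u2])
  have finC: "finite (verts C)" using wfC unfolding wf_graph_def by blast
  have uspC: "usp H1 + usp H2 \<le> usp C" using usp_ge[OF finC uC] l1 l2 by simp
  have injev: "inj_on (\<lambda>n::nat. 2*n) A" for A by (simp add: inj_on_def)
  have injod: "inj_on (\<lambda>n::nat. 2*n+1) A" for A by (simp add: inj_on_def)
  have "card (verts C) = card ((\<lambda>n. 2*n) ` verts H1) + card ((\<lambda>n. 2*n+1) ` verts H2)"
    unfolding C_def comb_verts by (rule card_Un_disjoint) (use f1 f2 in auto)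
  moreover have "card ((\<lambda>n::nat. 2*n) ` verts H1) = card (verts H1)" by (rule card_image[OF injev])
  moreover have "card ((\<lambda>n::nat. 2*n+1) ` verts H2) = card (verts H2)" by (rule card_image[OF injod])
  ultimately have cardC: "card (verts C) = card (verts H1) + card (verts H2)" by simp
  have le1: "usp H1 \<le> card (verts H1)" using usp_le_card[OF f1] .
  have le2: "usp H2 \<le> card (verts H2)" using usp_le_card[OF f2] .
  have "sp C \<le> sp H1 + sp H2" unfolding sp_def using cardC uspC le1 le2 by simp
  moreover have "sp_floor G \<le> sp C" by (rule sp_floor_le[OF wfC miC])
  ultimately show ?thesis by simp
qed

lemma floor_attained:
  fixes G :: "('v,'e) mgraph"
  assumes "wf_graph G"
  shows "\<exists>H :: (nat,nat) mgraph. wf_graph H \<and> is_minor G H \<and> sp H = sp_floor G"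
proof -
  obtain H0 :: "(nat,nat) mgraph" where "wf_graph H0" "is_minor G H0" using host_ex[OF assms] by blast
  then have ne: "{sp H | H :: (nat,nat) mgraph. wf_graph H \<and> is_minor G H} \<noteq> {}" by blast
  have "sp_floor G \<in> {sp H | H :: (nat,nat) mgraph. wf_graph H \<and> is_minor G H}"
    unfolding sp_floor_def by (rule Inf_nat_def1[OF ne])
  then show ?thesis by auto
qed

theorem theorem3p1:
  fixes G :: "('v, 'e) mgraph" and V1 V2 :: "'v set"
  assumes "wf_graph G"
    and "V1 \<noteq> {}" and "V2 \<noteq> {}"
    and "V1 \<union> V2 = verts G" and "V1 \<inter> V2 = {}"
    and "\<forall>e\<in>edges G. ends G e \<subseteq> V1 \<or> ends G e \<subseteq> V2"
  shows "sp_floor G = sp_floor (induced G V1) + sp_floor (induced G V2)"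
proof (rule antisym)
  have wfi: "wf_graph (induced G W)" if "W \<noteq> {}" "W \<subseteq> verts G" for W
  proof -
    have "finite (verts G)" using assms(1) unfolding wf_graph_def by blast
    then show ?thesis using assms(1) that unfolding wf_graph_def by (auto intro: finite_subset)
  qed
  have w1: "wf_graph (induced G V1)" using wfi assms(2,4) by blast
  have w2: "wf_graph (induced G V2)" using wfi assms(3,4) by blast
  obtain H1 :: "(nat,nat) mgraph" where H1: "wf_graph H1" "is_minor (induced G V1) H1" "sp H1 = sp_floor (induced G V1)"
    using floor_attained[OF w1] by blast
  obtain H2 :: "(nat,nat) mgraph" where H2: "wf_graph H2" "is_minor (induced G V2) H2" "sp H2 = sp_floor (induced G V2)"
    using floor_attained[OF w2] by blast
  have "sp_floor G \<le> sp H1 + sp H2"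
    by (rule floor_le[OF assms(1) assms(4,5,6) H1(1) H2(1) H1(2) H2(2)])
  then show "sp_floor G \<le> sp_floor (induced G V1) + sp_floor (induced G V2)" using H1(3) H2(3) by simp
next
  obtain H0 :: "(nat,nat) mgraph" where "wf_graph H0" "is_minor G H0" using host_ex[OF assms(1)] by blast
  then have ne: "{sp H | H :: (nat,nat) mgraph. wf_graph H \<and> is_minor G H} \<noteq> {}" by blast
  show "sp_floor (induced G V1) + sp_floor (induced G V2) \<le> sp_floor G"
    unfolding sp_floor_def[of G]
  proof (rule cInf_greatest[OF ne])
    fix x assume "x \<in> {sp H | H :: (nat,nat) mgraph. wf_graph H \<and> is_minor G H}"
    then obtain H :: "(nat,nat) mgraph" where H: "x = sp H" "wf_graph H" "is_minor G H" by blast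
    show "sp_floor (induced G V1) + sp_floor (induced G V2) \<le> x"
      using floor_ge[OF assms(1-5) H(2,3)] H(1) by simp
  qed
qed


end
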